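(* Let $G$ be a finite simple graph on vertex set $[n]$, $S=\mathbb{K}[x_1,\dots,x_n]$, $\mathcal{T}$ the set of triangles of $G$ (3-element vertex sets inducing $K_3$), and $M=\mathcal{F}(G)^{(2)}/\mathcal{F}(G)^2$ as a graded $\mathbb{K}$-vector space. Then for every integer $z$, $$H_M(z)=\sum_{T\in\mathcal{T}}H_{S_T/I_T}(z-3),$$ where $S_T=\mathbb{K}[x_v: v\in [n]\setminus N[T]]$, $I_T=\mathcal{F}(G-N[T])\subset S_T$, and $H_N(i)=\dim_{\mathbb{K}}N_i$ denotes the Hilbert function.
   Context: $\mathcal{F}(G)=(x_ix_j:\{i,j\}\in E(G))$. For squarefree monomial $I$, $I^{(2)}=\bigcap_{P\in\mathrm{Ass}(I)}P^2$. For $v$ a vertex, $N[v]=\{v\}\cup\{u:\{u,v\}\in E(G)\}$ is the closed neighborhood, and $N[A]=\bigcup_{v\in A}N[v]$. $G-N[T]$ denotes the induced subgraph of $G$ on the vertex set $[n]\setminus N[T]$. (If $[n]\setminus N[T]=\emptyset$ then $S_T=\mathbb{K}$ and $I_T=0$.) *)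

theory Defs
  imports Main "HOL.Vector_Spaces" "HOL-Library.Poly_Mapping"
begin

text \<open>Polynomials in variables x_i (i :: nat) over a field 'k:
  finitely supported maps from monomials (exponent vectors nat =>0 nat) to coefficients.\<close>
type_synonym 'k mpoly = "(nat \<Rightarrow>\<^sub>0 nat) \<Rightarrow>\<^sub>0 'k"

text \<open>The polynomial ring K[x_v : v in A], as a subset of all polynomials.\<close>
definition polyring :: "nat set \<Rightarrow> ('k::field) mpoly set" where
  "polyring A = {p. \<forall>m \<in> Poly_Mapping.keys (p::'k mpoly). Poly_Mapping.keys m \<subseteq> A}"

inductive_set ideal_gen :: "nat set \<Rightarrow> ('k::field) mpoly set \<Rightarrow> 'k mpoly set"
  for A X where
  gen: "x \<in> X \<Longrightarrow> x \<in> ideal_gen A X"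
| zero: "0 \<in> ideal_gen A X"
| add: "p \<in> ideal_gen A X \<Longrightarrow> q \<in> ideal_gen A X \<Longrightarrow> p + q \<in> ideal_gen A X"
| mult: "r \<in> polyring A \<Longrightarrow> p \<in> ideal_gen A X \<Longrightarrow> r * p \<in> ideal_gen A X"

definition is_ideal :: "nat set \<Rightarrow> ('k::field) mpoly set \<Rightarrow> bool" where
  "is_ideal A P \<longleftrightarrow> P \<subseteq> polyring A \<and> 0 \<in> P \<and> (\<forall>p\<in>P. \<forall>q\<in>P. p + q \<in> P)
     \<and> (\<forall>r\<in>polyring A. \<forall>p\<in>P. r * p \<in> P)"

definition is_prime_ideal :: "nat set \<Rightarrow> ('k::field) mpoly set \<Rightarrow> bool" where
  "is_prime_ideal A P \<longleftrightarrow> is_ideal A P \<and> P \<noteq> polyring A \<and>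
     (\<forall>a\<in>polyring A. \<forall>b\<in>polyring A. a * b \<in> P \<longrightarrow> a \<in> P \<or> b \<in> P)"

definition Ass :: "nat set \<Rightarrow> ('k::field) mpoly set \<Rightarrow> 'k mpoly set set" where
  "Ass A I = {P. is_prime_ideal A P \<and> (\<exists>f\<in>polyring A. P = {g\<in>polyring A. g * f \<in> I})}"

definition ideal_prod :: "nat set \<Rightarrow> ('k::field) mpoly set \<Rightarrow> 'k mpoly set \<Rightarrow> 'k mpoly set" where
  "ideal_prod A I J = ideal_gen A {f * g |f g. f \<in> I \<and> g \<in> J}"

text \<open>Second symbolic power, as defined for squarefree monomial ideals:
  intersection of the squares of the associated primes.\<close>
definition symb_sq :: "nat set \<Rightarrow> ('k::field) mpoly set \<Rightarrow> 'k mpoly set" where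
  "symb_sq A I = polyring A \<inter> \<Inter>{ideal_prod A P P |P. P \<in> Ass A I}"

definition xx :: "nat \<Rightarrow> nat \<Rightarrow> ('k::field) mpoly" where
  "xx i j = Poly_Mapping.single (Poly_Mapping.single i 1 + Poly_Mapping.single j 1) 1"

text \<open>Edge ideal F(G[A]) in polyring A, for a graph with edge set E (set of 2-sets).\<close>
definition edge_ideal :: "nat set \<Rightarrow> nat set set \<Rightarrow> ('k::field) mpoly set" where
  "edge_ideal A E = ideal_gen A {xx i j |i j. {i, j} \<in> E \<and> i \<in> A \<and> j \<in> A}"

definition mdeg :: "(nat \<Rightarrow>\<^sub>0 nat) \<Rightarrow> nat" where
  "mdeg m = (\<Sum>i\<in>Poly_Mapping.keys m. Poly_Mapping.lookup m i)"

definition homog :: "nat \<Rightarrow> ('k::field) mpoly set" where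
  "homog d = {p. \<forall>m\<in>Poly_Mapping.keys (p::'k mpoly). mdeg m = d}"

definition kscale :: "'k::field \<Rightarrow> 'k mpoly \<Rightarrow> 'k mpoly" where
  "kscale c p = Poly_Mapping.map (\<lambda>a. c * a) p"

text \<open>Hilbert function of the graded quotient J/I (I \<subseteq> J homogeneous ideals of polyring A):
  H(z) = dim_K J_z - dim_K I_z = dim_K (J/I)_z, and 0 for negative z.\<close>
definition hilb :: "nat set \<Rightarrow> ('k::field) mpoly set \<Rightarrow> 'k mpoly set \<Rightarrow> int \<Rightarrow> nat" where
  "hilb A J I z = (if z < 0 then 0 else
     vector_space.dim kscale (J \<inter> polyring A \<inter> homog (nat z))
     - vector_space.dim kscale (I \<inter> polyring A \<inter> homog (nat z)))"

definition closed_nbhd :: "nat set set \<Rightarrow> nat set \<Rightarrow> nat set" where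
  "closed_nbhd E T = T \<union> {u. \<exists>v\<in>T. {u, v} \<in> E}"

definition triangles :: "nat \<Rightarrow> nat set set \<Rightarrow> nat set set" where
  "triangles n E = {T. T \<subseteq> {1..n} \<and> card T = 3 \<and> (\<forall>u\<in>T. \<forall>v\<in>T. u \<noteq> v \<longrightarrow> {u, v} \<in> E)}"

end

theory Submission
  imports Defs
begin


lemma kscale_eq: "kscale c p = Poly_Mapping.single 0 c * p"
  unfolding kscale_def by (rule mult_map_scale_conv_mult)

interpretation kv: vector_space "kscale :: 'k::field \<Rightarrow> 'k mpoly \<Rightarrow> 'k mpoly"
  proof
  fix a b :: 'k and x y :: "'k mpoly"
  show "kscale a (x + y) = kscale a x + kscale a y" by (simp add: kscale_eq distrib_left)
  show "kscale (a + b) x = kscale a x + kscale b x" by (simp add: kscale_eq single_add distrib_right)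
  show "kscale a (kscale b x) = kscale (a * b) x" by (simp add: kscale_eq mult.assoc[symmetric] mult_single)
  show "kscale 1 x = x" by (simp add: kscale_eq)
qed

lemma idom_test: "(a::'k::field mpoly) * b = 0 \<Longrightarrow> a = 0 \<or> b = 0" by simp

lemma keys_add_nat: "Poly_Mapping.keys ((a::nat \<Rightarrow>\<^sub>0 nat) + b) = Poly_Mapping.keys a \<union> Poly_Mapping.keys b"
  by (auto simp: in_keys_iff lookup_add)


abbreviation mon :: "(nat \<Rightarrow>\<^sub>0 nat) \<Rightarrow> 'k::field mpoly" where
  "mon m \<equiv> Poly_Mapping.single m 1"

definition mdvd :: "(nat \<Rightarrow>\<^sub>0 nat) \<Rightarrow> (nat \<Rightarrow>\<^sub>0 nat) \<Rightarrow> bool" where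
  "mdvd g m \<longleftrightarrow> (\<forall>v. Poly_Mapping.lookup g v \<le> Poly_Mapping.lookup m v)"

definition MI :: "nat set \<Rightarrow> ((nat \<Rightarrow>\<^sub>0 nat) \<Rightarrow> bool) \<Rightarrow> 'k::field mpoly set" where
  "MI A Q = {p \<in> polyring A. \<forall>m\<in>Poly_Mapping.keys p. Q m}"

definition MG :: "nat set \<Rightarrow> (nat \<Rightarrow>\<^sub>0 nat) set \<Rightarrow> 'k::field mpoly set" where
  "MG A G = MI A (\<lambda>m. \<exists>g\<in>G. mdvd g m)"

lemma poly_expand:
  "p = (\<Sum>m\<in>Poly_Mapping.keys p. Poly_Mapping.single m (Poly_Mapping.lookup p m))"
proof (rule poly_mapping_eqI)
  fix k
  show "Poly_Mapping.lookup p k = Poly_Mapping.lookup (\<Sum>m\<in>Poly_Mapping.keys p. Poly_Mapping.single m (Poly_Mapping.lookup p m)) k"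
    by (simp add: lookup_sum lookup_single when_def in_keys_iff)
qed

lemma keys_sub_nat: "Poly_Mapping.keys ((a::'a \<Rightarrow>\<^sub>0 'b::ab_group_add) - b) \<subseteq> Poly_Mapping.keys a \<union> Poly_Mapping.keys b"
  by (auto simp: in_keys_iff lookup_minus)

lemma mult_mon_expand:
  "(p::'k::field mpoly) * mon u = (\<Sum>m\<in>Poly_Mapping.keys p. Poly_Mapping.single (m + u) (Poly_Mapping.lookup p m))"
proof -
  have "p * mon u = (\<Sum>m\<in>Poly_Mapping.keys p. Poly_Mapping.single m (Poly_Mapping.lookup p m)) * mon u"
    by (subst poly_expand[of p]) simp
  also have "\<dots> = (\<Sum>m\<in>Poly_Mapping.keys p. Poly_Mapping.single (m + u) (Poly_Mapping.lookup p m))"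
    by (simp add: sum_distrib_right mult_single)
  finally show ?thesis .
qed

lemma lookup_mult_mon:
  "Poly_Mapping.lookup ((p::'k::field mpoly) * mon u) (m + u) = Poly_Mapping.lookup p m"
  by (simp add: mult_mon_expand lookup_sum lookup_single when_def in_keys_iff)

lemma keys_mult_mon:
  "Poly_Mapping.keys ((p::'k::field mpoly) * mon u) = (\<lambda>m. m + u) ` Poly_Mapping.keys p"
proof
  show "Poly_Mapping.keys (p * mon u) \<subseteq> (\<lambda>m. m + u) ` Poly_Mapping.keys p"
  proof
    fix k assume k: "k \<in> Poly_Mapping.keys (p * mon u)"
    then obtain a b where "k = a + b" "a \<in> Poly_Mapping.keys p" "b \<in> Poly_Mapping.keys (mon u :: 'k mpoly)"
      using keys_mult[of p "mon u"] by blast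
    then show "k \<in> (\<lambda>m. m + u) ` Poly_Mapping.keys p" by auto
  qed
  show "(\<lambda>m. m + u) ` Poly_Mapping.keys p \<subseteq> Poly_Mapping.keys (p * mon u)"
    by (auto simp: in_keys_iff lookup_mult_mon)
qed

lemma polyring_add:
  assumes "p \<in> polyring A" "q \<in> polyring A" shows "p + q \<in> polyring A"
  unfolding polyring_def
proof (intro CollectI ballI)
  fix m assume "m \<in> Poly_Mapping.keys (p + q)"
  then have "m \<in> Poly_Mapping.keys p \<union> Poly_Mapping.keys q" by (rule subsetD[OF keys_add])
  then show "Poly_Mapping.keys m \<subseteq> A" using assms by (auto simp: polyring_def)
qed

lemma polyring_diff:
  assumes "p \<in> polyring A" "q \<in> polyring A" shows "p - q \<in> polyring A"
  unfolding polyring_def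
proof (intro CollectI ballI)
  fix m assume "m \<in> Poly_Mapping.keys (p - q)"
  then have "m \<in> Poly_Mapping.keys p \<union> Poly_Mapping.keys q" by (rule subsetD[OF keys_sub_nat])
  then show "Poly_Mapping.keys m \<subseteq> A" using assms by (auto simp: polyring_def)
qed

lemma polyring_mult:
  assumes p: "p \<in> polyring A" and q: "q \<in> polyring A"
  shows "p * q \<in> polyring A"
  unfolding polyring_def
proof (intro CollectI ballI subsetI)
  fix m x
  assume m: "m \<in> Poly_Mapping.keys (p * q)" and x: "x \<in> Poly_Mapping.keys m"
  have "m \<in> {a + b |a b. a \<in> Poly_Mapping.keys p \<and> b \<in> Poly_Mapping.keys q}"
    using m by (rule subsetD[OF keys_mult])
  then obtain a b where ab: "m = a + b" "a \<in> Poly_Mapping.keys p" "b \<in> Poly_Mapping.keys q"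
    by blast
  have "x \<in> Poly_Mapping.keys a \<union> Poly_Mapping.keys b" using x ab(1) keys_add_nat by simp
  moreover have "Poly_Mapping.keys a \<subseteq> A" using p ab(2) by (simp add: polyring_def)
  moreover have "Poly_Mapping.keys b \<subseteq> A" using q ab(3) by (simp add: polyring_def)
  ultimately show "x \<in> A" by blast
qed

lemma polyring_single: "Poly_Mapping.keys m \<subseteq> A \<Longrightarrow> Poly_Mapping.single m c \<in> polyring A"
  unfolding polyring_def by (simp split: if_splits)

lemma polyring_const: "Poly_Mapping.single 0 c \<in> polyring A"
  by (rule polyring_single) simp

lemma MI_ideal:
  assumes up: "\<And>m k. Q m \<Longrightarrow> Q (m + k)"
  shows "is_ideal A (MI A Q :: 'k::field mpoly set)"
  unfolding is_ideal_def
proof (intro conjI ballI)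
  show "MI A Q \<subseteq> polyring A" by (auto simp: MI_def)
  show "0 \<in> (MI A Q :: 'k mpoly set)" by (auto simp: MI_def polyring_def)
  fix p q :: "'k mpoly" assume "p \<in> MI A Q" "q \<in> MI A Q"
  then show "p + q \<in> MI A Q" unfolding MI_def
  proof (safe intro!: polyring_add)
    fix m assume mk: "m \<in> Poly_Mapping.keys (p + q)" and pq: "\<forall>m\<in>Poly_Mapping.keys p. Q m" "\<forall>m\<in>Poly_Mapping.keys q. Q m"
    have "m \<in> Poly_Mapping.keys p \<union> Poly_Mapping.keys q" using mk by (rule subsetD[OF keys_add])
    then show "Q m" using pq by auto
  qed
next
  fix r p :: "'k mpoly" assume r: "r \<in> polyring A" and p: "p \<in> MI A Q"
  have "r * p \<in> polyring A" using r p polyring_mult by (auto simp: MI_def)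
  moreover have "\<forall>m\<in>Poly_Mapping.keys (r * p). Q m"
  proof
    fix m assume "m \<in> Poly_Mapping.keys (r * p)"
    then obtain a b where "m = a + b" "a \<in> Poly_Mapping.keys r" "b \<in> Poly_Mapping.keys p"
      using keys_mult[of r p] by blast
    then show "Q m" using p up[of b a] by (auto simp: MI_def add.commute)
  qed
  ultimately show "r * p \<in> MI A Q" by (simp add: MI_def)
qed

lemma MI_diff: "p \<in> MI A Q \<Longrightarrow> q \<in> MI A Q \<Longrightarrow> p - q \<in> MI A Q"
  unfolding MI_def
proof (safe intro!: polyring_diff)
  fix m assume mk: "m \<in> Poly_Mapping.keys (p - q)" and pq: "\<forall>m\<in>Poly_Mapping.keys p. Q m" "\<forall>m\<in>Poly_Mapping.keys q. Q m"
  have "m \<in> Poly_Mapping.keys p \<union> Poly_Mapping.keys q" using mk by (rule subsetD[OF keys_sub_nat])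
  then show "Q m" using pq by auto
qed

lemma ideal_gen_sub:
  assumes "X \<subseteq> P" "is_ideal A P"
  shows "ideal_gen A X \<subseteq> P"
proof
  fix x assume "x \<in> ideal_gen A X"
  then show "x \<in> P"
    by induction (use assms in \<open>auto simp: is_ideal_def\<close>)
qed

lemma ideal_gen_mono:
  assumes "X \<subseteq> Y"
  shows "ideal_gen A X \<subseteq> ideal_gen A Y"
proof
  fix x assume "x \<in> ideal_gen A X"
  then show "x \<in> ideal_gen A Y"
    by induction (use assms in \<open>auto intro: ideal_gen.intros\<close>)
qed

lemma ideal_gen_sum:
  "finite S \<Longrightarrow> (\<And>x. x \<in> S \<Longrightarrow> f x \<in> ideal_gen A X) \<Longrightarrow> sum f S \<in> ideal_gen A X"
  by (induction S rule: finite_induct) (auto intro: ideal_gen.intros)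

lemma MI_sub_ideal_gen:
  assumes "\<And>m. Poly_Mapping.keys m \<subseteq> A \<Longrightarrow> Q m \<Longrightarrow> (mon m :: 'k::field mpoly) \<in> ideal_gen A X"
  shows "(MI A Q :: 'k mpoly set) \<subseteq> ideal_gen A X"
proof
  fix p :: "'k mpoly" assume p: "p \<in> MI A Q"
  have "(\<Sum>m\<in>Poly_Mapping.keys p. Poly_Mapping.single m (Poly_Mapping.lookup p m)) \<in> ideal_gen A X"
  proof (rule ideal_gen_sum)
    fix m assume m: "m \<in> Poly_Mapping.keys p"
    have "Poly_Mapping.single m (Poly_Mapping.lookup p m) = Poly_Mapping.single 0 (Poly_Mapping.lookup p m) * (mon m :: 'k mpoly)"
      by (simp add: mult_single)
    moreover have "(mon m :: 'k mpoly) \<in> ideal_gen A X"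
      using assms m p by (auto simp: MI_def polyring_def)
    ultimately show "Poly_Mapping.single m (Poly_Mapping.lookup p m) \<in> ideal_gen A X"
      by (simp add: ideal_gen.mult polyring_const)
  qed simp
  then show "p \<in> ideal_gen A X" using poly_expand[of p] by simp
qed

lemma mdvd_add: "mdvd g m \<Longrightarrow> mdvd g (m + k)"
  by (auto simp: mdvd_def lookup_add intro: le_add1 order_trans)

lemma mdvd_add2: "mdvd g1 m1 \<Longrightarrow> mdvd g2 m2 \<Longrightarrow> mdvd (g1 + g2) (m1 + m2)"
  by (auto simp: mdvd_def lookup_add intro: add_mono)

lemma mdvd_split: "mdvd g m \<Longrightarrow> m = (m - g) + g"
  by (rule poly_mapping_eqI) (auto simp: mdvd_def lookup_add lookup_minus)

lemma keys_minus_nat: "Poly_Mapping.keys ((m::nat \<Rightarrow>\<^sub>0 nat) - g) \<subseteq> Poly_Mapping.keys m"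
  by (auto simp: in_keys_iff lookup_minus)

lemma MG_ideal: "is_ideal A (MG A G :: 'k::field mpoly set)"
  unfolding MG_def by (rule MI_ideal) (auto intro: mdvd_add)

lemma ideal_gen_MG:
  assumes "\<And>g. g \<in> G \<Longrightarrow> Poly_Mapping.keys g \<subseteq> A"
  shows "ideal_gen A (mon ` G) = (MG A G :: 'k::field mpoly set)"
proof
  show "ideal_gen A (mon ` G) \<subseteq> (MG A G :: 'k mpoly set)"
  proof (rule ideal_gen_sub[OF _ MG_ideal])
    show "(mon ` G :: 'k mpoly set) \<subseteq> MG A G"
      using assms by (force simp: MG_def MI_def polyring_def mdvd_def)
  qed
  show "(MG A G :: 'k mpoly set) \<subseteq> ideal_gen A (mon ` G)"
    unfolding MG_def
  proof (rule MI_sub_ideal_gen)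
    fix m assume m: "Poly_Mapping.keys m \<subseteq> A" "\<exists>g\<in>G. mdvd g m"
    then obtain g where g: "g \<in> G" "mdvd g m" by blast
    have "(mon m :: 'k mpoly) = mon (m - g) * mon g"
      by (subst mdvd_split[OF g(2)]) (simp add: mult_single)
    moreover have "(mon (m - g) :: 'k mpoly) \<in> polyring A"
      using m keys_minus_nat[of m g] by (intro polyring_single) blast
    moreover have "(mon g :: 'k mpoly) \<in> ideal_gen A (mon ` G)"
      using g by (auto intro: ideal_gen.gen)
    ultimately show "(mon m :: 'k mpoly) \<in> ideal_gen A (mon ` G)"
      by (simp add: ideal_gen.mult)
  qed
qed

lemma ideal_prod_MG:
  assumes "\<And>g. g \<in> G1 \<Longrightarrow> Poly_Mapping.keys g \<subseteq> A" "\<And>g. g \<in> G2 \<Longrightarrow> Poly_Mapping.keys g \<subseteq> A"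
  shows "ideal_prod A (MG A G1) (MG A G2) = (MG A {g1 + g2 |g1 g2. g1 \<in> G1 \<and> g2 \<in> G2} :: 'k::field mpoly set)"
proof
  show "ideal_prod A (MG A G1) (MG A G2) \<subseteq> (MG A {g1 + g2 |g1 g2. g1 \<in> G1 \<and> g2 \<in> G2} :: 'k mpoly set)"
    unfolding ideal_prod_def
  proof (rule ideal_gen_sub[OF _ MG_ideal], safe)
    fix f g :: "'k mpoly" assume f: "f \<in> MG A G1" and g: "g \<in> MG A G2"
    have "f * g \<in> polyring A" using f g polyring_mult by (auto simp: MG_def MI_def)
    moreover have "\<exists>h\<in>{g1 + g2 |g1 g2. g1 \<in> G1 \<and> g2 \<in> G2}. mdvd h m" if mfg: "m \<in> Poly_Mapping.keys (f * g)" for m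
    proof -
      obtain a b where ab: "m = a + b" "a \<in> Poly_Mapping.keys f" "b \<in> Poly_Mapping.keys g"
        using keys_mult[of f g] mfg by blast
      obtain g1 where "g1 \<in> G1" "mdvd g1 a"
        using f ab(2) by (auto simp: MG_def MI_def)
      moreover obtain g2 where "g2 \<in> G2" "mdvd g2 b"
        using g ab(3) by (auto simp: MG_def MI_def)
      ultimately have "g1 + g2 \<in> {g1 + g2 |g1 g2. g1 \<in> G1 \<and> g2 \<in> G2}" "mdvd (g1 + g2) m"
        by (auto simp: ab(1) intro: mdvd_add2)
      then show ?thesis by blast
    qed
    ultimately show "f * g \<in> MG A {g1 + g2 |g1 g2. g1 \<in> G1 \<and> g2 \<in> G2}"
      by (simp add: MG_def MI_def)
  qed
  have G12: "\<And>g. g \<in> {g1 + g2 |g1 g2. g1 \<in> G1 \<and> g2 \<in> G2} \<Longrightarrow> Poly_Mapping.keys g \<subseteq> A"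
    using assms by (auto simp: keys_add_nat dest!: assms)
  have "(MG A {g1 + g2 |g1 g2. g1 \<in> G1 \<and> g2 \<in> G2} :: 'k mpoly set) = ideal_gen A (mon ` {g1 + g2 |g1 g2. g1 \<in> G1 \<and> g2 \<in> G2})"
    by (rule ideal_gen_MG[OF G12, symmetric])
  also have "\<dots> \<subseteq> ideal_prod A (MG A G1) (MG A G2)"
    unfolding ideal_prod_def
  proof (rule ideal_gen_mono, rule subsetI)
    fix x assume "x \<in> (mon ` {g1 + g2 |g1 g2. g1 \<in> G1 \<and> g2 \<in> G2} :: 'k mpoly set)"
    then obtain g1 g2 where g: "x = mon (g1 + g2)" "g1 \<in> G1" "g2 \<in> G2" by blast
    have "(mon (g1 + g2) :: 'k mpoly) = mon g1 * mon g2" by (simp add: mult_single)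
    moreover have "(mon g1 :: 'k mpoly) \<in> MG A G1" "(mon g2 :: 'k mpoly) \<in> MG A G2"
      using g assms by (auto simp: MG_def MI_def polyring_def mdvd_def)
    ultimately show "x \<in> {f * g |f g. f \<in> MG A G1 \<and> g \<in> MG A G2}"
      using g(1) by fast
  qed
  finally show "(MG A {g1 + g2 |g1 g2. g1 \<in> G1 \<and> g2 \<in> G2} :: 'k mpoly set) \<subseteq> ideal_prod A (MG A G1) (MG A G2)" .
qed


definition sgl :: "nat \<Rightarrow> (nat \<Rightarrow>\<^sub>0 nat)" where
  "sgl i = Poly_Mapping.single i 1"

lemma lookup_sgl: "Poly_Mapping.lookup (sgl i) v = (if i = v then 1 else 0)"
  by (simp add: sgl_def lookup_single when_def)

lemma keys_sgl [simp]: "Poly_Mapping.keys (sgl i) = {i}"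
  by (simp add: sgl_def)

definition EG :: "nat set \<Rightarrow> nat set set \<Rightarrow> (nat \<Rightarrow>\<^sub>0 nat) set" where
  "EG A E = {sgl i + sgl j |i j. {i, j} \<in> E \<and> i \<in> A \<and> j \<in> A}"

definition vcover :: "nat set \<Rightarrow> nat set set \<Rightarrow> nat set \<Rightarrow> bool" where
  "vcover A E C \<longleftrightarrow> C \<subseteq> A \<and> (\<forall>e\<in>E. e \<inter> C \<noteq> {})"

definition mincover :: "nat set \<Rightarrow> nat set set \<Rightarrow> nat set \<Rightarrow> bool" where
  "mincover A E C \<longleftrightarrow> vcover A E C \<and> (\<forall>C'. C' \<subset> C \<longrightarrow> \<not> vcover A E C')"

definition pair2 :: "nat set \<Rightarrow> (nat \<Rightarrow>\<^sub>0 nat) set" where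
  "pair2 C = {g1 + g2 |g1 g2. g1 \<in> sgl ` C \<and> g2 \<in> sgl ` C}"

lemma mdvd_sgl: "mdvd (sgl i) m \<longleftrightarrow> 1 \<le> Poly_Mapping.lookup m i"
  unfolding mdvd_def lookup_sgl by (metis le0 order_refl)

lemma one_le_lookup: "1 \<le> Poly_Mapping.lookup (m::nat \<Rightarrow>\<^sub>0 nat) i \<longleftrightarrow> i \<in> Poly_Mapping.keys m"
  by (simp add: in_keys_iff Suc_le_eq)

lemma mdvd_sgl_keys: "mdvd (sgl i) m \<longleftrightarrow> i \<in> Poly_Mapping.keys m"
  by (auto simp: mdvd_sgl in_keys_iff Suc_le_eq)

lemma mdvd_two: "mdvd (sgl i + sgl j) m \<longleftrightarrow>
   (if i = j then 2 \<le> Poly_Mapping.lookup m i else 1 \<le> Poly_Mapping.lookup m i \<and> 1 \<le> Poly_Mapping.lookup m j)"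
proof
  assume h: "mdvd (sgl i + sgl j) m"
  have a: "Poly_Mapping.lookup (sgl i + sgl j) i \<le> Poly_Mapping.lookup m i"
    and b: "Poly_Mapping.lookup (sgl i + sgl j) j \<le> Poly_Mapping.lookup m j"
    using h by (auto simp: mdvd_def)
  then show "(if i = j then 2 \<le> Poly_Mapping.lookup m i else 1 \<le> Poly_Mapping.lookup m i \<and> 1 \<le> Poly_Mapping.lookup m j)"
    by (auto simp: lookup_add lookup_sgl split: if_splits)
next
  assume "(if i = j then 2 \<le> Poly_Mapping.lookup m i else 1 \<le> Poly_Mapping.lookup m i \<and> 1 \<le> Poly_Mapping.lookup m j)"
  then show "mdvd (sgl i + sgl j) m"
    by (auto simp: mdvd_def lookup_add lookup_sgl split: if_splits)
qed

lemma keys_EG: "g \<in> EG A E \<Longrightarrow> Poly_Mapping.keys g \<subseteq> A"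
  by (auto simp: EG_def keys_add_nat)

lemma keys_sgl_img: "C \<subseteq> A \<Longrightarrow> g \<in> sgl ` C \<Longrightarrow> Poly_Mapping.keys g \<subseteq> A"
  by auto

lemma edge_ideal_MG: "edge_ideal A E = (MG A (EG A E) :: 'k::field mpoly set)"
proof -
  have "{xx i j |i j. {i, j} \<in> E \<and> i \<in> A \<and> j \<in> A} = (mon ` EG A E :: 'k mpoly set)"
    by (auto simp: xx_def EG_def sgl_def)
  then show ?thesis
    unfolding edge_ideal_def using ideal_gen_MG[of "EG A E" A] keys_EG by metis
qed

definition PC :: "nat set \<Rightarrow> nat set \<Rightarrow> 'k::field mpoly set" where
  "PC A C = MG A (sgl ` C)"

lemma PC_sq: "C \<subseteq> A \<Longrightarrow> ideal_prod A (PC A C) (PC A C) = (MG A (pair2 C) :: 'k::field mpoly set)"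
  unfolding PC_def pair2_def by (rule ideal_prod_MG) auto

lemma PC_mem: "(p :: 'k::field mpoly) \<in> PC A C \<longleftrightarrow> p \<in> polyring A \<and>
   (\<forall>m\<in>Poly_Mapping.keys p. Poly_Mapping.keys m \<inter> C \<noteq> {})"
  by (auto simp: PC_def MG_def MI_def mdvd_sgl_keys)

lemma exists_mincover:
  assumes fin: "finite A" and cov: "vcover A E C"
  shows "\<exists>C'\<subseteq>C. mincover A E C'"
proof -
  obtain C' where c1: "C' \<subseteq> C \<and> vcover A E C'" and c2: "\<forall>D. D \<subseteq> C \<and> vcover A E D \<longrightarrow> card C' \<le> card D"
    using ex_has_least_nat[of "\<lambda>D. D \<subseteq> C \<and> vcover A E D" C card] cov by blast
  have finC': "finite C'" using c1 fin by (meson vcover_def finite_subset)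
  have "mincover A E C'"
    unfolding mincover_def
  proof (intro conjI allI impI)
    show "vcover A E C'" using c1 by simp
    fix D assume D: "D \<subset> C'"
    show "\<not> vcover A E D"
    proof
      assume "vcover A E D"
      then have "card C' \<le> card D" using c2 D c1 by blast
      moreover have "card D < card C'" using psubset_card_mono[OF finC' D] .
      ultimately show False by simp
    qed
  qed
  then show ?thesis using c1 by blast
qed


definition phi :: "nat set \<Rightarrow> 'k::field mpoly \<Rightarrow> 'k mpoly" where
  "phi C p = (\<Sum>m\<in>{m\<in>Poly_Mapping.keys p. Poly_Mapping.keys m \<inter> C = {}}. Poly_Mapping.single m (Poly_Mapping.lookup p m))"

lemma lookup_phi: "Poly_Mapping.lookup (phi C p) k = (if Poly_Mapping.keys k \<inter> C = {} then Poly_Mapping.lookup p k else 0)"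
proof -
  have "Poly_Mapping.lookup (phi C p) k =
     (\<Sum>m\<in>{m\<in>Poly_Mapping.keys p. Poly_Mapping.keys m \<inter> C = {}}. if m = k then Poly_Mapping.lookup p m else 0)"
    by (simp add: phi_def lookup_sum lookup_single when_def eq_commute)
  also have "\<dots> = (if k \<in> {m\<in>Poly_Mapping.keys p. Poly_Mapping.keys m \<inter> C = {}} then Poly_Mapping.lookup p k else 0)"
    by (rule sum.delta) simp
  also have "\<dots> = (if Poly_Mapping.keys k \<inter> C = {} then Poly_Mapping.lookup p k else 0)"
    by (auto simp: in_keys_iff)
  finally show ?thesis .
qed

lemma keys_phi: "Poly_Mapping.keys (phi C p) = {m\<in>Poly_Mapping.keys p. Poly_Mapping.keys m \<inter> C = {}}"
proof (rule set_eqI)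
  fix m show "m \<in> Poly_Mapping.keys (phi C p) \<longleftrightarrow> m \<in> {m\<in>Poly_Mapping.keys p. Poly_Mapping.keys m \<inter> C = {}}"
    by (simp only: mem_Collect_eq in_keys_iff[of m "phi C p"] in_keys_iff[of m p] lookup_phi) auto
qed

lemma keys_phi_diff: "m \<in> Poly_Mapping.keys (p - phi C p) \<Longrightarrow> Poly_Mapping.keys m \<inter> C \<noteq> {}"
  by (simp only: in_keys_iff[of m "p - phi C p"] lookup_minus lookup_phi) auto

lemma phi_polyring: "p \<in> polyring A \<Longrightarrow> phi C p \<in> polyring A"
  by (auto simp: polyring_def keys_phi)

lemma PC_ideal: "is_ideal A (PC A C :: 'k::field mpoly set)"
  unfolding PC_def by (rule MG_ideal)

lemma diff_phi_PC: "(p::'k::field mpoly) \<in> polyring A \<Longrightarrow> p - phi C p \<in> PC A C"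
  using keys_phi_diff[of _ p C] by (auto simp: PC_mem intro!: polyring_diff phi_polyring)

lemma PC_prime:
  "is_prime_ideal A (PC A C :: 'k::field mpoly set)"
  unfolding is_prime_ideal_def
proof (intro conjI ballI impI)
  show "is_ideal A (PC A C :: 'k mpoly set)" by (rule PC_ideal)
  have "(1 :: 'k mpoly) \<in> polyring A" by (simp add: polyring_def)
  moreover have "(1 :: 'k mpoly) \<notin> PC A C" by (simp add: PC_mem)
  ultimately show "(PC A C :: 'k mpoly set) \<noteq> polyring A" by blast
  fix a b :: "'k mpoly"
  assume a: "a \<in> polyring A" and b: "b \<in> polyring A" and ab: "a * b \<in> PC A C"
  define a' where "a' = phi C a"
  define b' where "b' = phi C b"
  have a'p: "a' \<in> polyring A" and b'p: "b' \<in> polyring A"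
    using a b by (simp_all add: a'_def b'_def phi_polyring)
  have da: "a - a' \<in> PC A C" and db: "b - b' \<in> PC A C"
    using a b diff_phi_PC by (auto simp: a'_def b'_def)
  have I: "is_ideal A (PC A C :: 'k mpoly set)" by (rule PC_ideal)
  have addI: "\<And>p q. p \<in> PC A C \<Longrightarrow> q \<in> PC A C \<Longrightarrow> p + q \<in> (PC A C :: 'k mpoly set)"
    and multI: "\<And>r p. r \<in> polyring A \<Longrightarrow> p \<in> PC A C \<Longrightarrow> r * p \<in> (PC A C :: 'k mpoly set)"
    using I unfolding is_ideal_def by auto
  have br: "a' * (b - b') + (a - a') * b \<in> PC A C"
    using addI[OF multI[OF a'p db] multI[OF b da]] by (simp add: mult.commute)
  have eq: "a' * b' = a * b - (a' * (b - b') + (a - a') * b)"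
    by (simp add: algebra_simps)
  have "a' * b' \<in> PC A C"
    unfolding eq PC_def by (rule MI_diff[OF ab[unfolded PC_def MG_def] br[unfolded PC_def MG_def], folded MG_def])
  moreover have "Poly_Mapping.keys m \<inter> C = {}" if m: "m \<in> Poly_Mapping.keys (a' * b')" for m
  proof -
    have "m \<in> {x + y |x y. x \<in> Poly_Mapping.keys a' \<and> y \<in> Poly_Mapping.keys b'}"
      using m by (rule subsetD[OF keys_mult])
    then obtain x y where xy: "m = x + y" "x \<in> Poly_Mapping.keys a'" "y \<in> Poly_Mapping.keys b'" by blast
    have "Poly_Mapping.keys x \<inter> C = {}" "Poly_Mapping.keys y \<inter> C = {}"
      using xy(2,3) by (auto simp: a'_def b'_def keys_phi)
    then show ?thesis using xy(1) by (auto simp: keys_add_nat)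
  qed
  ultimately have "Poly_Mapping.keys (a' * b') = {}"
    by (auto simp: PC_mem)
  then have "a' * b' = 0" by simp
  then have "a' = 0 \<or> b' = 0" by simp
  then show "a \<in> PC A C \<or> b \<in> PC A C" using da db by auto
qed


lemma edge_two:
  assumes "card e = 2"
  obtains i j where "e = {i, j}" "i \<noteq> j"
  using assms by (meson card_2_iff)

lemma EG_mem: "h \<in> EG A E \<longleftrightarrow> (\<exists>i j. h = sgl i + sgl j \<and> {i, j} \<in> E \<and> i \<in> A \<and> j \<in> A)"
  by (auto simp: EG_def)

definition uvec :: "nat set \<Rightarrow> nat set \<Rightarrow> (nat \<Rightarrow>\<^sub>0 nat)" where
  "uvec A C = (\<Sum>i\<in>A - C. sgl i)"

lemma lookup_uvec: "finite A \<Longrightarrow> Poly_Mapping.lookup (uvec A C) v = (if v \<in> A - C then 1 else 0)"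
  by (simp add: uvec_def lookup_sum lookup_sgl)

lemma keys_uvec: "finite A \<Longrightarrow> Poly_Mapping.keys (uvec A C) \<subseteq> A"
  by (auto simp: in_keys_iff lookup_uvec split: if_splits)

lemma KL:
  assumes fin: "finite A" and EA: "\<forall>e\<in>E. e \<subseteq> A \<and> card e = 2"
    and mc: "mincover A E C" and mA: "Poly_Mapping.keys m \<subseteq> A"
  shows "(\<exists>h\<in>EG A E. mdvd h (m + uvec A C)) \<longleftrightarrow> Poly_Mapping.keys m \<inter> C \<noteq> {}"
proof
  assume "\<exists>h\<in>EG A E. mdvd h (m + uvec A C)"
  then obtain i j where h: "mdvd (sgl i + sgl j) (m + uvec A C)" "{i, j} \<in> E" "i \<in> A" "j \<in> A"
    by (auto simp: EG_mem)
  have "card {i, j} = 2" using EA h(2) by blast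
  then have ij: "i \<noteq> j" by auto
  have li: "1 \<le> Poly_Mapping.lookup m i + Poly_Mapping.lookup (uvec A C) i"
    and lj: "1 \<le> Poly_Mapping.lookup m j + Poly_Mapping.lookup (uvec A C) j"
    using h(1) ij by (auto simp: mdvd_two lookup_add)
  have "{i, j} \<inter> C \<noteq> {}" using mc h(2) by (auto simp: mincover_def vcover_def)
  then have "i \<in> C \<or> j \<in> C" by auto
  then show "Poly_Mapping.keys m \<inter> C \<noteq> {}"
  proof
    assume iC: "i \<in> C"
    then have "Poly_Mapping.lookup (uvec A C) i = 0" by (simp add: lookup_uvec fin)
    then have "i \<in> Poly_Mapping.keys m" using li by (simp add: in_keys_iff)
    then show ?thesis using iC by blast
  next
    assume jC: "j \<in> C"
    then have "Poly_Mapping.lookup (uvec A C) j = 0" by (simp add: lookup_uvec fin)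
    then have "j \<in> Poly_Mapping.keys m" using lj by (simp add: in_keys_iff)
    then show ?thesis using jC by blast
  qed
next
  assume "Poly_Mapping.keys m \<inter> C \<noteq> {}"
  then obtain i where i: "i \<in> Poly_Mapping.keys m" "i \<in> C" by blast
  have CA: "C \<subseteq> A" using mc by (simp add: mincover_def vcover_def)
  have "\<not> vcover A E (C - {i})" using mc i(2) by (auto simp: mincover_def)
  moreover have "C - {i} \<subseteq> A" using CA by blast
  ultimately obtain e where e: "e \<in> E" "e \<inter> (C - {i}) = {}" by (auto simp: vcover_def)
  have "e \<inter> C \<noteq> {}" using mc e(1) by (auto simp: mincover_def vcover_def)
  then have ie: "i \<in> e" using e(2) by blast
  obtain x y where xy: "e = {x, y}" "x \<noteq> y" using EA e(1) edge_two by blast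
  obtain w where w: "e = {i, w}" "w \<noteq> i"
    using xy ie by (metis insert_commute insertE singletonD)
  have wC: "w \<notin> C" using e(2) w by blast
  have wA: "w \<in> A" and iA: "i \<in> A" using EA e(1) w(1) by auto
  have "sgl i + sgl w \<in> EG A E" using e(1) w(1) wA iA by (auto simp: EG_mem)
  moreover have "mdvd (sgl i + sgl w) (m + uvec A C)"
    using w(2) i(1) wC wA fin by (auto simp: mdvd_two lookup_add lookup_uvec in_keys_iff)
  ultimately show "\<exists>h\<in>EG A E. mdvd h (m + uvec A C)" by blast
qed

lemma PC_colon:
  assumes fin: "finite A" and EA: "\<forall>e\<in>E. e \<subseteq> A \<and> card e = 2"
    and mc: "mincover A E C"
  shows "(PC A C :: 'k::field mpoly set) = {g \<in> polyring A. g * mon (uvec A C) \<in> edge_ideal A E}"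
proof (rule set_eqI)
  fix g :: "'k mpoly"
  have up: "(mon (uvec A C) :: 'k mpoly) \<in> polyring A"
    by (rule polyring_single) (rule keys_uvec[OF fin])
  show "g \<in> PC A C \<longleftrightarrow> g \<in> {g \<in> polyring A. g * mon (uvec A C) \<in> edge_ideal A E}"
  proof (cases "g \<in> polyring A")
    case False
    then show ?thesis by (simp add: PC_mem)
  next
    case True
    have gm: "g * mon (uvec A C) \<in> polyring A" using True up by (rule polyring_mult)
    have "g * mon (uvec A C) \<in> edge_ideal A E \<longleftrightarrow>
        (\<forall>k\<in>Poly_Mapping.keys (g * mon (uvec A C)). \<exists>h\<in>EG A E. mdvd h k)"
      using gm by (simp add: edge_ideal_MG MG_def MI_def)
    also have "\<dots> \<longleftrightarrow> (\<forall>m\<in>Poly_Mapping.keys g. \<exists>h\<in>EG A E. mdvd h (m + uvec A C))"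
      by (simp add: keys_mult_mon)
    also have "\<dots> \<longleftrightarrow> (\<forall>m\<in>Poly_Mapping.keys g. Poly_Mapping.keys m \<inter> C \<noteq> {})"
    proof -
      have "\<And>m. m \<in> Poly_Mapping.keys g \<Longrightarrow> Poly_Mapping.keys m \<subseteq> A"
        using True by (simp add: polyring_def)
      then show ?thesis using KL[OF fin EA mc] by auto
    qed
    finally show ?thesis using True by (simp add: PC_mem)
  qed
qed

lemma PC_Ass:
  assumes fin: "finite A" and EA: "\<forall>e\<in>E. e \<subseteq> A \<and> card e = 2"
    and mc: "mincover A E C"
  shows "(PC A C :: 'k::field mpoly set) \<in> Ass A (edge_ideal A E)"
proof -
  have up: "(mon (uvec A C) :: 'k mpoly) \<in> polyring A"
    by (rule polyring_single) (rule keys_uvec[OF fin])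
  show ?thesis
    unfolding Ass_def using PC_prime PC_colon[OF fin EA mc] up by blast
qed

lemma edge_ideal_sub_Ass:
  assumes P: "P \<in> Ass A (edge_ideal A E :: 'k::field mpoly set)"
  shows "edge_ideal A E \<subseteq> P"
proof
  fix g :: "'k mpoly" assume g: "g \<in> edge_ideal A E"
  obtain f where f: "f \<in> polyring A" "P = {g \<in> polyring A. g * f \<in> edge_ideal A E}"
    using P by (auto simp: Ass_def)
  have I: "is_ideal A (edge_ideal A E :: 'k mpoly set)" by (simp add: edge_ideal_MG MG_ideal)
  have "g \<in> polyring A" using I g by (auto simp: is_ideal_def)
  moreover have "f * g \<in> edge_ideal A E" using I g f(1) by (auto simp: is_ideal_def)
  ultimately show "g \<in> P" using f(2) by (simp add: mult.commute)
qed

lemma prime_contains_PC: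
  assumes fin: "finite A" and EA: "\<forall>e\<in>E. e \<subseteq> A \<and> card e = 2"
    and pr: "is_prime_ideal A (P :: 'k::field mpoly set)" and sub: "edge_ideal A E \<subseteq> P"
  shows "\<exists>C. mincover A E C \<and> PC A C \<subseteq> P"
proof -
  define C where "C = {i \<in> A. (mon (sgl i) :: 'k mpoly) \<in> P}"
  have "vcover A E C"
    unfolding vcover_def
  proof (intro conjI ballI)
    show "C \<subseteq> A" by (auto simp: C_def)
    fix e assume e: "e \<in> E"
    obtain i j where ij: "e = {i, j}" "i \<noteq> j" using EA e edge_two by blast
    have iA: "i \<in> A" and jA: "j \<in> A" using EA e ij by auto
    have "(mon (sgl i) :: 'k mpoly) * mon (sgl j) = xx i j"
      by (simp add: xx_def sgl_def mult_single)
    moreover have "(xx i j :: 'k mpoly) \<in> edge_ideal A E"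
      unfolding edge_ideal_def using e ij iA jA by (auto intro: ideal_gen.gen)
    ultimately have "(mon (sgl i) :: 'k mpoly) * mon (sgl j) \<in> P" using sub by auto
    moreover have "(mon (sgl i) :: 'k mpoly) \<in> polyring A" "(mon (sgl j) :: 'k mpoly) \<in> polyring A"
      using iA jA by (auto intro: polyring_single)
    ultimately have "(mon (sgl i) :: 'k mpoly) \<in> P \<or> (mon (sgl j) :: 'k mpoly) \<in> P"
      using pr by (simp add: is_prime_ideal_def)
    then show "e \<inter> C \<noteq> {}" using ij iA jA by (auto simp: C_def)
  qed
  then obtain C' where C': "C' \<subseteq> C" "mincover A E C'" using exists_mincover[OF fin] by blast
  have "PC A C' = ideal_gen A (mon ` sgl ` C')"
    unfolding PC_def using C' by (intro ideal_gen_MG[symmetric]) (auto simp: C_def)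
  also have "\<dots> \<subseteq> P"
  proof (rule ideal_gen_sub)
    show "(mon ` sgl ` C' :: 'k mpoly set) \<subseteq> P" using C' by (auto simp: C_def)
    show "is_ideal A P" using pr by (simp add: is_prime_ideal_def)
  qed
  finally show ?thesis using C' by blast
qed

theorem symb_sq_char:
  assumes fin: "finite A" and EA: "\<forall>e\<in>E. e \<subseteq> A \<and> card e = 2"
  shows "symb_sq A (edge_ideal A E :: 'k::field mpoly set) =
    MI A (\<lambda>m. \<forall>C. mincover A E C \<longrightarrow> (\<exists>g\<in>pair2 C. mdvd g m))"
proof (rule set_eqI)
  fix p :: "'k mpoly"
  have sq: "\<And>C. mincover A E C \<Longrightarrow> ideal_prod A (PC A C) (PC A C) = (MG A (pair2 C) :: 'k mpoly set)"
    by (rule PC_sq) (simp add: mincover_def vcover_def)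
  show "p \<in> symb_sq A (edge_ideal A E) \<longleftrightarrow> p \<in> MI A (\<lambda>m. \<forall>C. mincover A E C \<longrightarrow> (\<exists>g\<in>pair2 C. mdvd g m))"
  proof
    assume p: "p \<in> symb_sq A (edge_ideal A E)"
    have pp: "p \<in> polyring A" using p by (simp add: symb_sq_def)
    have "\<forall>m\<in>Poly_Mapping.keys p. \<forall>C. mincover A E C \<longrightarrow> (\<exists>g\<in>pair2 C. mdvd g m)"
    proof (intro ballI allI impI)
      fix m C assume m: "m \<in> Poly_Mapping.keys p" and mc: "mincover A E C"
      have "PC A C \<in> Ass A (edge_ideal A E :: 'k mpoly set)" by (rule PC_Ass[OF fin EA mc])
      then have "p \<in> ideal_prod A (PC A C) (PC A C)" using p by (auto simp: symb_sq_def)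
      then have "p \<in> MG A (pair2 C)" using sq[OF mc] by simp
      then show "\<exists>g\<in>pair2 C. mdvd g m" using m by (auto simp: MG_def MI_def)
    qed
    then show "p \<in> MI A (\<lambda>m. \<forall>C. mincover A E C \<longrightarrow> (\<exists>g\<in>pair2 C. mdvd g m))"
      using pp by (simp add: MI_def)
  next
    assume p: "p \<in> MI A (\<lambda>m. \<forall>C. mincover A E C \<longrightarrow> (\<exists>g\<in>pair2 C. mdvd g m))"
    have pp: "p \<in> polyring A" using p by (simp add: MI_def)
    have "p \<in> ideal_prod A P P" if P: "P \<in> Ass A (edge_ideal A E)" for P
    proof -
      have pr: "is_prime_ideal A P" using P by (simp add: Ass_def)
      obtain C where C: "mincover A E C" "PC A C \<subseteq> P"
        using prime_contains_PC[OF fin EA pr edge_ideal_sub_Ass[OF P]] by blast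
      have "p \<in> MG A (pair2 C)" using p C(1) by (auto simp: MG_def MI_def)
      then have "p \<in> ideal_prod A (PC A C) (PC A C)" using sq[OF C(1)] by simp
      also have "\<dots> \<subseteq> ideal_prod A P P"
        unfolding ideal_prod_def by (rule ideal_gen_mono) (use C(2) in blast)
      finally show ?thesis .
    qed
    then show "p \<in> symb_sq A (edge_ideal A E)" using pp by (auto simp: symb_sq_def)
  qed
qed


lemma lookup_le_mdeg: "Poly_Mapping.lookup m x \<le> mdeg m"
proof (cases "x \<in> Poly_Mapping.keys m")
  case True
  then show ?thesis unfolding mdeg_def by (intro member_le_sum) auto
next
  case False
  then show ?thesis by (simp add: in_keys_iff)
qed

lemma finite_monos: "finite A \<Longrightarrow> finite {m. Poly_Mapping.keys m \<subseteq> A \<and> mdeg m = d}"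
proof -
  assume fin: "finite A"
  let ?S = "{m. Poly_Mapping.keys m \<subseteq> A \<and> mdeg m = d}"
  have "Poly_Mapping.lookup ` ?S \<subseteq> {f. \<forall>x. (x \<in> A \<longrightarrow> f x \<in> {0..d}) \<and> (x \<notin> A \<longrightarrow> f x = 0)}"
  proof (rule image_subsetI)
    fix m assume "m \<in> ?S"
    then have mk: "Poly_Mapping.keys m \<subseteq> A" and md: "mdeg m = d" by auto
    have "Poly_Mapping.lookup m x \<in> {0..d}" for x using lookup_le_mdeg[of m x] md by simp
    moreover have "x \<notin> A \<Longrightarrow> Poly_Mapping.lookup m x = 0" for x
      using mk by (metis in_keys_iff subsetD)
    ultimately show "Poly_Mapping.lookup m \<in> {f. \<forall>x. (x \<in> A \<longrightarrow> f x \<in> {0..d}) \<and> (x \<notin> A \<longrightarrow> f x = 0)}"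
      by blast
  qed
  moreover have "finite {f. \<forall>x. (x \<in> A \<longrightarrow> f x \<in> {0..d}) \<and> (x \<notin> A \<longrightarrow> f x = (0::nat))}"
    by (rule finite_set_of_finite_funs) (use fin in auto)
  ultimately have "finite (Poly_Mapping.lookup ` ?S)" by (rule finite_subset)
  moreover have "inj_on Poly_Mapping.lookup ?S"
    by (rule inj_onI, rule poly_mapping_eqI) simp
  ultimately show ?thesis by (rule finite_imageD)
qed

lemma kscale_mon: "kscale c (mon m :: 'k::field mpoly) = Poly_Mapping.single m c"
  by (simp add: kscale_eq mult_single)

lemma dim_MI:
  assumes fin: "finite A"
  shows "vector_space.dim kscale ((MI A Q :: 'k::field mpoly set) \<inter> homog d) =
     card {m. Poly_Mapping.keys m \<subseteq> A \<and> mdeg m = d \<and> Q m}"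
proof -
  let ?M = "{m. Poly_Mapping.keys m \<subseteq> A \<and> mdeg m = d \<and> Q m}"
  let ?V = "(MI A Q :: 'k mpoly set) \<inter> homog d"
  let ?B = "(mon ` ?M :: 'k mpoly set)"
  have finM: "finite ?M"
    by (rule finite_subset[OF _ finite_monos[OF fin, of d]]) auto
  have injM: "inj_on (mon :: _ \<Rightarrow> 'k mpoly) ?M"
    by (rule inj_onI) (metis lookup_single_eq lookup_single_not_eq one_neq_zero)
  have BV: "?B \<subseteq> ?V"
    by (auto simp: MI_def homog_def intro: polyring_single)
  have VB: "?V \<subseteq> kv.span ?B"
  proof
    fix p assume p: "p \<in> ?V"
    have "(\<Sum>m\<in>Poly_Mapping.keys p. kscale (Poly_Mapping.lookup p m) (mon m :: 'k mpoly)) \<in> kv.span ?B"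
    proof (rule kv.span_sum)
      fix m assume m: "m \<in> Poly_Mapping.keys p"
      have "m \<in> ?M" using p m by (auto simp: MI_def homog_def polyring_def)
      then have "(mon m :: 'k mpoly) \<in> kv.span ?B" by (intro kv.span_base) blast
      then show "kscale (Poly_Mapping.lookup p m) (mon m :: 'k mpoly) \<in> kv.span ?B"
        by (rule kv.span_scale)
    qed
    moreover have "(\<Sum>m\<in>Poly_Mapping.keys p. kscale (Poly_Mapping.lookup p m) (mon m :: 'k mpoly)) = p"
      unfolding kscale_mon by (rule poly_expand[symmetric])
    ultimately show "p \<in> kv.span ?B" by simp
  qed
  have indep: "kv.independent ?B"
  proof (rule kv.independent_if_scalars_zero)
    show "finite ?B" using finM by simp
    fix c v assume c: "(\<Sum>v\<in>?B. kscale (c v) v) = 0" and v: "v \<in> ?B"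
    obtain m where m: "m \<in> ?M" "v = mon m" using v by blast
    have "(\<Sum>v\<in>?B. kscale (c v) v) = (\<Sum>m'\<in>?M. Poly_Mapping.single m' (c (mon m')))"
      by (simp add: sum.reindex[OF injM] kscale_mon)
    then have "(\<Sum>m'\<in>?M. Poly_Mapping.single m' (c (mon m'))) = 0" using c by simp
    then have "Poly_Mapping.lookup (\<Sum>m'\<in>?M. Poly_Mapping.single m' (c (mon m'))) m = 0" by simp
    moreover have "Poly_Mapping.lookup (\<Sum>m'\<in>?M. Poly_Mapping.single m' (c (mon m'))) m = c (mon m)"
      using m(1) finM by (simp add: lookup_sum lookup_single when_def)
    ultimately show "c v = 0" using m(2) by simp
  qed
  have "card ?B = kv.dim ?V" by (rule kv.basis_card_eq_dim[OF BV VB indep])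
  moreover have "card ?B = card ?M" by (rule card_image[OF injM])
  ultimately show ?thesis by simp
qed

lemma hilb_MI:
  assumes fin: "finite A" and sub: "\<And>m. Q1 m \<Longrightarrow> Q2 m" and z: "0 \<le> z"
  shows "hilb A (MI A Q2 :: 'k::field mpoly set) (MI A Q1) z =
    card {m. Poly_Mapping.keys m \<subseteq> A \<and> mdeg m = nat z \<and> Q2 m \<and> \<not> Q1 m}"
proof -
  have e1: "(MI A Q2 :: 'k mpoly set) \<inter> polyring A = MI A Q2" by (auto simp: MI_def)
  have e2: "(MI A Q1 :: 'k mpoly set) \<inter> polyring A = MI A Q1" by (auto simp: MI_def)
  let ?M1 = "{m. Poly_Mapping.keys m \<subseteq> A \<and> mdeg m = nat z \<and> Q1 m}"
  let ?M2 = "{m. Poly_Mapping.keys m \<subseteq> A \<and> mdeg m = nat z \<and> Q2 m}"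
  have fin2: "finite ?M2" by (rule finite_subset[OF _ finite_monos[OF fin, of "nat z"]]) auto
  have s12: "?M1 \<subseteq> ?M2" using sub by auto
  have "hilb A (MI A Q2 :: 'k::field mpoly set) (MI A Q1) z = card ?M2 - card ?M1"
    using z by (simp add: hilb_def e1 e2 dim_MI[OF fin])
  also have "\<dots> = card (?M2 - ?M1)" using card_Diff_subset[OF finite_subset[OF s12 fin2] s12] by simp
  also have "?M2 - ?M1 = {m. Poly_Mapping.keys m \<subseteq> A \<and> mdeg m = nat z \<and> Q2 m \<and> \<not> Q1 m}" by auto
  finally show ?thesis .
qed


abbreviation lk :: "(nat \<Rightarrow>\<^sub>0 nat) \<Rightarrow> nat \<Rightarrow> nat" where
  "lk m v \<equiv> Poly_Mapping.lookup m v"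

definition quad :: "nat \<Rightarrow> nat \<Rightarrow> nat \<Rightarrow> nat \<Rightarrow> (nat \<Rightarrow>\<^sub>0 nat)" where
  "quad i j k l = sgl i + sgl j + (sgl k + sgl l)"

lemma lookup_quad: "lk (quad i j k l) v =
  (if v = i then 1 else 0) + (if v = j then 1 else 0) + (if v = k then 1 else 0) + (if v = l then 1 else 0)"
  by (simp add: quad_def lookup_add lookup_sgl eq_commute)

definition EG2 :: "nat set \<Rightarrow> nat set set \<Rightarrow> (nat \<Rightarrow>\<^sub>0 nat) set" where
  "EG2 A E = {g1 + g2 |g1 g2. g1 \<in> EG A E \<and> g2 \<in> EG A E}"

definition Qsq :: "nat set \<Rightarrow> nat set set \<Rightarrow> (nat \<Rightarrow>\<^sub>0 nat) \<Rightarrow> bool" where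
  "Qsq A E m \<longleftrightarrow> (\<exists>g\<in>EG2 A E. mdvd g m)"

definition Q2 :: "nat set \<Rightarrow> nat set set \<Rightarrow> (nat \<Rightarrow>\<^sub>0 nat) \<Rightarrow> bool" where
  "Q2 A E m \<longleftrightarrow> (\<forall>C. mincover A E C \<longrightarrow> (\<exists>g\<in>pair2 C. mdvd g m))"

definition cdeg2 :: "nat set \<Rightarrow> (nat \<Rightarrow>\<^sub>0 nat) \<Rightarrow> bool" where
  "cdeg2 C m \<longleftrightarrow> (\<exists>i\<in>C. 2 \<le> lk m i) \<or> (\<exists>i\<in>C. \<exists>j\<in>C. i \<noteq> j \<and> i \<in> Poly_Mapping.keys m \<and> j \<in> Poly_Mapping.keys m)"

lemma pair2_cdeg2: "(\<exists>g\<in>pair2 C. mdvd g m) \<longleftrightarrow> cdeg2 C m"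
proof
  assume "\<exists>g\<in>pair2 C. mdvd g m"
  then obtain i j where ij: "i \<in> C" "j \<in> C" "mdvd (sgl i + sgl j) m" by (auto simp: pair2_def)
  show "cdeg2 C m"
  proof (cases "i = j")
    case True
    then have "2 \<le> lk m i" using ij(3) by (simp add: mdvd_two)
    then show ?thesis using ij(1) unfolding cdeg2_def by blast
  next
    case False
    then have "1 \<le> lk m i" "1 \<le> lk m j" using ij(3) by (simp_all add: mdvd_two)
    then have "i \<in> Poly_Mapping.keys m" "j \<in> Poly_Mapping.keys m" by (auto simp: in_keys_iff)
    then show ?thesis using ij(1,2) False unfolding cdeg2_def by blast
  qed
next
  assume "cdeg2 C m"
  then consider (a) i where "i \<in> C" "2 \<le> lk m i"
    | (b) i j where "i \<in> C" "j \<in> C" "i \<noteq> j" "i \<in> Poly_Mapping.keys m" "j \<in> Poly_Mapping.keys m"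
    unfolding cdeg2_def by blast
  then show "\<exists>g\<in>pair2 C. mdvd g m"
  proof cases
    case a
    then have "sgl i + sgl i \<in> pair2 C" "mdvd (sgl i + sgl i) m" by (auto simp: pair2_def mdvd_two)
    then show ?thesis by blast
  next
    case b
    then have "sgl i + sgl j \<in> pair2 C" "mdvd (sgl i + sgl j) m"
      by (auto simp: pair2_def mdvd_two in_keys_iff Suc_le_eq)
    then show ?thesis by blast
  qed
qed

lemma cdeg2_mono: "C' \<subseteq> C \<Longrightarrow> cdeg2 C' m \<Longrightarrow> cdeg2 C m"
  unfolding cdeg2_def by blast

lemma Q2_cover:
  assumes fin: "finite A"
  shows "Q2 A E m \<longleftrightarrow> (\<forall>C. vcover A E C \<longrightarrow> cdeg2 C m)"
proof
  assume q: "Q2 A E m"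
  show "\<forall>C. vcover A E C \<longrightarrow> cdeg2 C m"
  proof (intro allI impI)
    fix C assume "vcover A E C"
    then obtain C' where "C' \<subseteq> C" "mincover A E C'" using exists_mincover[OF fin] by blast
    then show "cdeg2 C m" using q cdeg2_mono by (auto simp: Q2_def pair2_cdeg2)
  qed
next
  assume "\<forall>C. vcover A E C \<longrightarrow> cdeg2 C m"
  then show "Q2 A E m" by (auto simp: Q2_def pair2_cdeg2 mincover_def)
qed

lemma Qsq_iff: "Qsq A E m \<longleftrightarrow> (\<exists>i j k l. {i, j} \<in> E \<and> {k, l} \<in> E \<and> i \<in> A \<and> j \<in> A \<and> k \<in> A \<and> l \<in> A
   \<and> (\<forall>v. lk (quad i j k l) v \<le> lk m v))"
proof
  assume "Qsq A E m"
  then show "\<exists>i j k l. {i, j} \<in> E \<and> {k, l} \<in> E \<and> i \<in> A \<and> j \<in> A \<and> k \<in> A \<and> l \<in> A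
   \<and> (\<forall>v. lk (quad i j k l) v \<le> lk m v)"
    by (auto simp: Qsq_def EG2_def EG_def quad_def mdvd_def)
next
  assume "\<exists>i j k l. {i, j} \<in> E \<and> {k, l} \<in> E \<and> i \<in> A \<and> j \<in> A \<and> k \<in> A \<and> l \<in> A
   \<and> (\<forall>v. lk (quad i j k l) v \<le> lk m v)"
  then obtain i j k l where h: "{i, j} \<in> E" "{k, l} \<in> E" "i \<in> A" "j \<in> A" "k \<in> A" "l \<in> A"
    "\<forall>v. lk (quad i j k l) v \<le> lk m v" by blast
  have "sgl i + sgl j \<in> EG A E" "sgl k + sgl l \<in> EG A E" using h unfolding EG_def by blast+
  then have "quad i j k l \<in> EG2 A E" unfolding EG2_def quad_def by blast
  moreover have "mdvd (quad i j k l) m" using h(7) by (simp add: mdvd_def)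
  ultimately show "Qsq A E m" unfolding Qsq_def by blast
qed

lemma Qsq_P1:
  assumes "{a, b} \<in> E" "{c, d} \<in> E" "a \<in> A" "b \<in> A" "c \<in> A" "d \<in> A"
    "a \<noteq> b" "a \<noteq> c" "a \<noteq> d" "b \<noteq> c" "b \<noteq> d" "c \<noteq> d"
    "1 \<le> lk m a" "1 \<le> lk m b" "1 \<le> lk m c" "1 \<le> lk m d"
  shows "Qsq A E m"
  unfolding Qsq_iff
  by (rule exI[of _ a], rule exI[of _ b], rule exI[of _ c], rule exI[of _ d]) (use assms in \<open>auto simp: lookup_quad\<close>)

lemma Qsq_P2:
  assumes "{a, b} \<in> E" "{b, c} \<in> E" "a \<in> A" "b \<in> A" "c \<in> A"
    "a \<noteq> b" "a \<noteq> c" "b \<noteq> c"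
    "1 \<le> lk m a" "2 \<le> lk m b" "1 \<le> lk m c"
  shows "Qsq A E m"
  unfolding Qsq_iff
  by (rule exI[of _ a], rule exI[of _ b], rule exI[of _ b], rule exI[of _ c]) (use assms in \<open>auto simp: lookup_quad\<close>)

lemma Qsq_P3:
  assumes "{a, b} \<in> E" "a \<in> A" "b \<in> A" "a \<noteq> b" "2 \<le> lk m a" "2 \<le> lk m b"
  shows "Qsq A E m"
  unfolding Qsq_iff
  by (rule exI[of _ a], rule exI[of _ b], rule exI[of _ a], rule exI[of _ b]) (use assms in \<open>auto simp: lookup_quad\<close>)

lemma mdvd_trans: "mdvd a b \<Longrightarrow> mdvd b c \<Longrightarrow> mdvd a c"
  unfolding mdvd_def using order_trans by blast

lemma Qsq_Q2:
  assumes fin: "finite A" and EA: "\<forall>e\<in>E. e \<subseteq> A \<and> card e = 2"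
  shows "Qsq A E m \<Longrightarrow> Q2 A E m"
proof -
  assume "Qsq A E m"
  then obtain g1 g2 where g: "g1 \<in> EG A E" "g2 \<in> EG A E" "mdvd (g1 + g2) m"
    by (auto simp: Qsq_def EG2_def)
  obtain i j where ij: "g1 = sgl i + sgl j" "{i, j} \<in> E" using g(1) by (auto simp: EG_def)
  obtain k l where kl: "g2 = sgl k + sgl l" "{k, l} \<in> E" using g(2) by (auto simp: EG_def)
  show "Q2 A E m"
    unfolding Q2_def
  proof (intro allI impI)
    fix C assume "mincover A E C"
    then have cov: "{i, j} \<inter> C \<noteq> {}" "{k, l} \<inter> C \<noteq> {}" using ij kl by (auto simp: mincover_def vcover_def)
    obtain x where x: "x \<in> {i, j}" "x \<in> C" using cov(1) by blast
    obtain y where y: "y \<in> {k, l}" "y \<in> C" using cov(2) by blast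
    have "mdvd (sgl x) g1" using x(1) ij(1) by (auto simp: mdvd_def lookup_add lookup_sgl)
    moreover have "mdvd (sgl y) g2" using y(1) kl(1) by (auto simp: mdvd_def lookup_add lookup_sgl)
    ultimately have "mdvd (sgl x + sgl y) (g1 + g2)" by (rule mdvd_add2)
    then have "mdvd (sgl x + sgl y) m" using g(3) by (rule mdvd_trans)
    moreover have "sgl x + sgl y \<in> pair2 C" using x y by (auto simp: pair2_def)
    ultimately show "\<exists>g\<in>pair2 C. mdvd g m" by blast
  qed
qed


definition xT :: "nat set \<Rightarrow> (nat \<Rightarrow>\<^sub>0 nat)" where
  "xT T = (\<Sum>i\<in>T. sgl i)"

lemma lookup_xT: "finite T \<Longrightarrow> lk (xT T) v = (if v \<in> T then 1 else 0)"
  by (simp add: xT_def lookup_sum lookup_sgl)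

definition tri :: "nat set \<Rightarrow> nat set set \<Rightarrow> nat set set" where
  "tri A E = {T. T \<subseteq> A \<and> card T = 3 \<and> (\<forall>u\<in>T. \<forall>v\<in>T. u \<noteq> v \<longrightarrow> {u, v} \<in> E)}"

definition edge_in :: "nat set set \<Rightarrow> (nat \<Rightarrow>\<^sub>0 nat) \<Rightarrow> bool" where
  "edge_in E m \<longleftrightarrow> (\<exists>i j. {i, j} \<in> E \<and> i \<in> Poly_Mapping.keys m \<and> j \<in> Poly_Mapping.keys m)"

lemma keys_ge1: "v \<in> Poly_Mapping.keys m \<longleftrightarrow> 1 \<le> lk m v"
  by (auto simp: in_keys_iff)

locale gr =
  fixes A :: "nat set" and E :: "nat set set"
  assumes fin: "finite A" and EA: "\<forall>e\<in>E. e \<subseteq> A \<and> card e = 2"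
begin

lemma edge_ne:
  assumes e: "{i, j} \<in> E" shows "i \<noteq> j"
proof
  assume "i = j"
  then have "card {i, j} = 1" by simp
  moreover have "card {i, j} = 2" using bspec[OF EA e] by simp
  ultimately show False by simp
qed

lemma edge_A: assumes e: "{i, j} \<in> E" shows "i \<in> A \<and> j \<in> A"
  using bspec[OF EA e] by simp

lemma tri_finite:
  assumes T: "T \<in> tri A E" shows "finite T"
proof (rule ccontr)
  assume "infinite T"
  then have "card T = 0" by simp
  moreover have "card T = 3" using T by (simp add: tri_def)
  ultimately show False by simp
qed

lemma tri_others:
  assumes T: "T \<in> tri A E" and v: "v \<in> T"
  shows "\<exists>p q. T = {v, p, q} \<and> v \<noteq> p \<and> v \<noteq> q \<and> p \<noteq> q \<and> {v, p} \<in> E \<and> {v, q} \<in> E \<and> {p, q} \<in> E"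
proof -
  obtain x y z where xyz: "T = {x, y, z}" "x \<noteq> y" "y \<noteq> z" "x \<noteq> z"
    using T by (auto simp: tri_def card_3_iff)
  have E: "\<And>u w. u \<in> T \<Longrightarrow> w \<in> T \<Longrightarrow> u \<noteq> w \<Longrightarrow> {u, w} \<in> E" using T by (auto simp: tri_def)
  have xT: "x \<in> T" and yT: "y \<in> T" and zT: "z \<in> T" using xyz by auto
  have exy: "{x, y} \<in> E" by (rule E[OF xT yT xyz(2)])
  have eyz: "{y, z} \<in> E" by (rule E[OF yT zT xyz(3)])
  have exz: "{x, z} \<in> E" by (rule E[OF xT zT xyz(4)])
  have eyx: "{y, x} \<in> E" using exy by (simp add: insert_commute)
  have ezx: "{z, x} \<in> E" using exz by (simp add: insert_commute)
  have ezy: "{z, y} \<in> E" using eyz by (simp add: insert_commute)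
  have "v = x \<or> v = y \<or> v = z" using v xyz by auto
  then show ?thesis
  proof (elim disjE)
    assume vv: "v = x" show ?thesis
      by (intro exI[of _ y] exI[of _ z]) (simp add: vv xyz exy exz eyz)
  next
    assume vv: "v = y"
    have t: "T = {v, x, z}" using xyz(1) vv by (simp add: insert_commute)
    have "T = {v, x, z} \<and> v \<noteq> x \<and> v \<noteq> z \<and> x \<noteq> z \<and> {v, x} \<in> E \<and> {v, z} \<in> E \<and> {x, z} \<in> E"
      using t vv xyz eyx eyz exz by simp
    then show ?thesis by blast
  next
    assume vv: "v = z"
    have t: "T = {v, x, y}" using xyz(1) vv by (simp add: insert_commute)
    have "T = {v, x, y} \<and> v \<noteq> x \<and> v \<noteq> y \<and> x \<noteq> y \<and> {v, x} \<in> E \<and> {v, y} \<in> E \<and> {x, y} \<in> E"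
      using t vv xyz ezx ezy exy by simp
    then show ?thesis by blast
  qed
qed

lemma tri_A: "T \<in> tri A E \<Longrightarrow> T \<subseteq> A"
  by (simp add: tri_def)

lemma tri_intro:
  assumes "{a, b} \<in> E" "{b, c} \<in> E" "{a, c} \<in> E" "a \<noteq> b" "b \<noteq> c" "a \<noteq> c"
  shows "{a, b, c} \<in> tri A E"
  using assms edge_A unfolding tri_def by (auto simp: insert_commute)

end


context gr
begin

lemma C1_Q2:
  assumes T: "T \<in> tri A E"
  shows "Q2 A E (xT T + m')"
proof -
  let ?m = "xT T + m'"
  have finT: "finite T" by (rule tri_finite[OF T])
  have inK: "v \<in> Poly_Mapping.keys ?m" if "v \<in> T" for v
    using that finT by (simp add: in_keys_iff lookup_add lookup_xT)
  have "T \<noteq> {}" using T by (auto simp: tri_def)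
  then obtain a where a: "a \<in> T" by blast
  obtain p q where apq: "T = {a, p, q}" "a \<noteq> p" "a \<noteq> q" "p \<noteq> q" "{a, p} \<in> E" "{a, q} \<in> E" "{p, q} \<in> E"
    using tri_others[OF T a] by blast
  show ?thesis
    unfolding Q2_cover[OF fin]
  proof (intro allI impI)
    fix C assume C: "vcover A E C"
    have c1: "{a, p} \<inter> C \<noteq> {}" and c2: "{a, q} \<inter> C \<noteq> {}" and c3: "{p, q} \<inter> C \<noteq> {}"
      using C apq by (auto simp: vcover_def)
    have "(a \<in> C \<and> p \<in> C) \<or> (a \<in> C \<and> q \<in> C) \<or> (p \<in> C \<and> q \<in> C)" using c1 c2 c3 by blast
    moreover have "a \<in> Poly_Mapping.keys ?m" "p \<in> Poly_Mapping.keys ?m" "q \<in> Poly_Mapping.keys ?m"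
      using inK apq(1) by auto
    ultimately show "cdeg2 C ?m" unfolding cdeg2_def using apq(2-4) by blast
  qed
qed

lemma pigeon3:
  assumes "card T = 3" "i \<in> T" "j \<in> T" "k \<in> T" "l \<in> T" "i \<noteq> j" "k \<noteq> l"
  shows "k = i \<or> k = j \<or> l = i \<or> l = j"
proof (rule ccontr)
  assume "\<not> ?thesis"
  then have d: "k \<noteq> i" "k \<noteq> j" "l \<noteq> i" "l \<noteq> j" by auto
  have fT: "finite T" using assms(1) by (metis card.infinite zero_neq_numeral)
  have "{i, j, k, l} \<subseteq> T" using assms by auto
  then have "card {i, j, k, l} \<le> card T" using fT by (rule card_mono[rotated])
  moreover have "card {i, j, k, l} = 4" using d assms(6,7) by simp
  ultimately show False using assms(1) by simp
qed

lemma C1_notQsq: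
  assumes T: "T \<in> tri A E" and mk: "Poly_Mapping.keys m' \<subseteq> A - closed_nbhd E T"
    and ne: "\<not> edge_in E m'"
  shows "\<not> Qsq A E (xT T + m')"
proof
  let ?m = "xT T + m'"
  assume "Qsq A E ?m"
  then obtain i j k l where h: "{i, j} \<in> E" "{k, l} \<in> E" "\<forall>v. lk (quad i j k l) v \<le> lk ?m v"
    unfolding Qsq_iff by blast
  have finT: "finite T" by (rule tri_finite[OF T])
  have TN: "T \<subseteq> closed_nbhd E T" by (auto simp: closed_nbhd_def)
  have lkT: "lk ?m v = 1" if "v \<in> T" for v
  proof -
    have "v \<notin> Poly_Mapping.keys m'" using mk TN that by blast
    then show ?thesis using that finT by (simp add: lookup_add lookup_xT in_keys_iff)
  qed
  have lkO: "lk ?m v = lk m' v" if "v \<notin> T" for v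
    using that finT by (simp add: lookup_add lookup_xT)
  have inT: "x \<in> T" if e: "{x, y} \<in> E" and lx: "1 \<le> lk ?m x" and ly: "1 \<le> lk ?m y" for x y
  proof (rule ccontr)
    assume xT: "x \<notin> T"
    then have "x \<in> Poly_Mapping.keys m'" using lx lkO by (simp add: keys_ge1)
    then have xN: "x \<notin> closed_nbhd E T" using mk by blast
    show False
    proof (cases "y \<in> T")
      case True
      then have "x \<in> closed_nbhd E T" using e by (auto simp: closed_nbhd_def)
      then show False using xN by simp
    next
      case False
      then have "y \<in> Poly_Mapping.keys m'" using ly lkO by (simp add: keys_ge1)
      then show False using ne e \<open>x \<in> Poly_Mapping.keys m'\<close> unfolding edge_in_def by blast
    qed
  qed
  have li: "1 \<le> lk ?m i" using h(3)[rule_format, of i] by (simp add: lookup_quad)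
  have lj: "1 \<le> lk ?m j" using h(3)[rule_format, of j] by (simp add: lookup_quad)
  have lk': "1 \<le> lk ?m k" using h(3)[rule_format, of k] by (simp add: lookup_quad)
  have ll: "1 \<le> lk ?m l" using h(3)[rule_format, of l] by (simp add: lookup_quad)
  have h1': "{j, i} \<in> E" "{l, k} \<in> E" using h(1,2) by (simp_all add: insert_commute)
  have iT: "i \<in> T" by (rule inT[OF h(1) li lj])
  have jT: "j \<in> T" by (rule inT[OF h1'(1) lj li])
  have kT: "k \<in> T" by (rule inT[OF h(2) lk' ll])
  have lT: "l \<in> T" by (rule inT[OF h1'(2) ll lk'])
  have c3: "card T = 3" using T by (simp add: tri_def)
  have "k = i \<or> k = j \<or> l = i \<or> l = j"
    using pigeon3[OF c3 iT jT kT lT edge_ne[OF h(1)] edge_ne[OF h(2)]] .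
  then show False
  proof (elim disjE)
    assume "k = i" then show False using h(3)[rule_format, of i] lkT[OF iT] by (simp add: lookup_quad)
  next
    assume "k = j" then show False using h(3)[rule_format, of j] lkT[OF jT] by (simp add: lookup_quad)
  next
    assume "l = i" then show False using h(3)[rule_format, of i] lkT[OF iT] by (simp add: lookup_quad)
  next
    assume "l = j" then show False using h(3)[rule_format, of j] lkT[OF jT] by (simp add: lookup_quad)
  qed
qed

end


context gr
begin

lemma keysA: "Poly_Mapping.keys m \<subseteq> A \<Longrightarrow> v \<in> Poly_Mapping.keys m \<Longrightarrow> v \<in> A"
  by blast

lemma star_lemma:
  assumes mA: "Poly_Mapping.keys m \<subseteq> A" and nq: "\<not> Qsq A E m"
    and nt: "\<not> (\<exists>T\<in>tri A E. T \<subseteq> Poly_Mapping.keys m)"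
    and ab: "{a, b} \<in> E" and aS: "a \<in> Poly_Mapping.keys m" and bS: "b \<in> Poly_Mapping.keys m"
    and la: "lk m a = 1"
  shows "\<exists>c\<in>Poly_Mapping.keys m. lk m c = 1 \<and>
     (\<forall>i j. {i, j} \<in> E \<and> i \<in> Poly_Mapping.keys m \<and> j \<in> Poly_Mapping.keys m \<longrightarrow> c = i \<or> c = j)"
proof -
  let ?S = "Poly_Mapping.keys m"
  have anb: "a \<noteq> b" by (rule edge_ne[OF ab])
  have aA: "a \<in> A" and bA: "b \<in> A" using mA aS bS by auto
  have l1: "\<And>v. v \<in> ?S \<Longrightarrow> 1 \<le> lk m v" by (simp add: keys_ge1)
  have meets: "i = a \<or> i = b \<or> j = a \<or> j = b" if e: "{i, j} \<in> E" and iS: "i \<in> ?S" and jS: "j \<in> ?S" for i j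
  proof (rule ccontr)
    assume "\<not> ?thesis"
    then have d: "i \<noteq> a" "i \<noteq> b" "j \<noteq> a" "j \<noteq> b" by auto
    have "Qsq A E m"
      by (rule Qsq_P1[OF ab e aA bA]) (use d anb edge_ne[OF e] iS jS mA l1 aS bS in auto)
    then show False using nq by simp
  qed
  show ?thesis
  proof (cases "\<forall>i j. {i, j} \<in> E \<and> i \<in> ?S \<and> j \<in> ?S \<longrightarrow> a = i \<or> a = j")
    case True
    then show ?thesis using aS la by blast
  next
    case False
    then obtain i j where ij: "{i, j} \<in> E" "i \<in> ?S" "j \<in> ?S" "a \<noteq> i" "a \<noteq> j" by blast
    have "b = i \<or> b = j" using meets[OF ij(1-3)] ij(4,5) by auto
    then obtain w where w: "{b, w} \<in> E" "w \<in> ?S" "w \<noteq> a" "w \<noteq> b"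
    proof
      assume "b = i" then show thesis using that ij edge_ne[OF ij(1)] by auto
    next
      assume "b = j" then show thesis using that ij edge_ne[OF ij(1)] by (auto simp: insert_commute)
    qed
    have wA: "w \<in> A" using mA w(2) by auto
    have lb: "lk m b = 1"
    proof (rule ccontr)
      assume "lk m b \<noteq> 1"
      then have "2 \<le> lk m b" using l1[OF bS] by simp
      then have "Qsq A E m"
        by (intro Qsq_P2[OF ab w(1) aA bA wA anb]) (use w anb l1 aS wA in auto)
      then show False using nq by simp
    qed
    have allb: "b = p \<or> b = q" if e: "{p, q} \<in> E" and pS: "p \<in> ?S" and qS: "q \<in> ?S" for p q
    proof (rule ccontr)
      assume nb: "\<not> (b = p \<or> b = q)"
      then have "a = p \<or> a = q" using meets[OF e pS qS] by auto
      then obtain y where y: "{a, y} \<in> E" "y \<in> ?S" "y \<noteq> a" "y \<noteq> b"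
      proof
        assume "a = p" then show thesis using that e qS nb edge_ne[OF e] by auto
      next
        assume "a = q" then show thesis using that e pS nb edge_ne[OF e] by (auto simp: insert_commute)
      qed
      have yA: "y \<in> A" using mA y(2) by auto
      show False
      proof (cases "y = w")
        case True
        have wa: "{a, w} \<in> E" using y(1) True by simp
        have "{a, b, w} \<in> tri A E" by (rule tri_intro[OF ab w(1) wa anb w(4)[symmetric] w(3)[symmetric]])
        moreover have "{a, b, w} \<subseteq> ?S" using aS bS w(2) by auto
        ultimately show False using nt by blast
      next
        case False
        have "Qsq A E m"
          by (rule Qsq_P1[OF y(1) w(1) aA yA bA wA]) (use y w anb False l1 aS bS in auto)
        then show False using nq by simp
      qed
    qed
    show ?thesis using bS lb allb by blast
  qed
qed

lemma no_tri_cover: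
  assumes mA: "Poly_Mapping.keys m \<subseteq> A" and nq: "\<not> Qsq A E m"
    and nt: "\<not> (\<exists>T\<in>tri A E. T \<subseteq> Poly_Mapping.keys m)"
  shows "\<exists>C. vcover A E C \<and> \<not> cdeg2 C m"
proof -
  let ?S = "Poly_Mapping.keys m"
  have l0: "\<And>v. v \<notin> ?S \<Longrightarrow> lk m v = 0" by (simp add: in_keys_iff)
  show ?thesis
  proof (cases "\<exists>i j. {i, j} \<in> E \<and> i \<in> ?S \<and> j \<in> ?S")
    case False
    have "vcover A E (A - ?S)"
      unfolding vcover_def
    proof (intro conjI ballI)
      fix e assume e: "e \<in> E"
      obtain i j where ij: "e = {i, j}" using bspec[OF EA e] by (metis card_2_iff)
      have "i \<in> A" "j \<in> A" using edge_A e ij by auto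
      then show "e \<inter> (A - ?S) \<noteq> {}" using False e ij by blast
    qed simp
    moreover have "\<not> cdeg2 (A - ?S) m" unfolding cdeg2_def using l0 by auto
    ultimately show ?thesis by blast
  next
    case True
    then obtain a b where ab: "{a, b} \<in> E" "a \<in> ?S" "b \<in> ?S" by blast
    have anb: "a \<noteq> b" by (rule edge_ne[OF ab(1)])
    have aA: "a \<in> A" and bA: "b \<in> A" using mA ab by auto
    have "lk m a = 1 \<or> lk m b = 1"
    proof (rule ccontr)
      assume "\<not> ?thesis"
      then have "2 \<le> lk m a" "2 \<le> lk m b" using ab(2,3) by (auto simp: keys_ge1)
      then have "Qsq A E m" by (intro Qsq_P3[OF ab(1) aA bA anb])
      then show False using nq by simp
    qed
    then obtain c where c: "c \<in> ?S" "lk m c = 1"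
      "\<forall>i j. {i, j} \<in> E \<and> i \<in> ?S \<and> j \<in> ?S \<longrightarrow> c = i \<or> c = j"
    proof
      assume "lk m a = 1"
      then show thesis using star_lemma[OF mA nq nt ab(1) ab(2) ab(3)] that by blast
    next
      assume "lk m b = 1"
      moreover have "{b, a} \<in> E" using ab(1) by (simp add: insert_commute)
      ultimately show thesis using star_lemma[OF mA nq nt _ ab(3) ab(2)] that by blast
    qed
    have cA: "c \<in> A" using mA c(1) by auto
    have "vcover A E ((A - ?S) \<union> {c})"
      unfolding vcover_def
    proof (intro conjI ballI)
      show "(A - ?S) \<union> {c} \<subseteq> A" using cA by blast
      fix e assume e: "e \<in> E"
      obtain i j where ij: "e = {i, j}" using bspec[OF EA e] by (metis card_2_iff)
      have "i \<in> A" "j \<in> A" using edge_A e ij by auto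
      moreover have "i \<in> ?S \<and> j \<in> ?S \<longrightarrow> c = i \<or> c = j" using c(3) e ij by blast
      ultimately show "e \<inter> ((A - ?S) \<union> {c}) \<noteq> {}" using ij by blast
    qed
    moreover have "\<not> cdeg2 ((A - ?S) \<union> {c}) m"
      unfolding cdeg2_def using l0 c(2) by auto
    ultimately show ?thesis by blast
  qed
qed

end


context gr
begin

lemma C2:
  assumes mA: "Poly_Mapping.keys m \<subseteq> A" and q2: "Q2 A E m" and nq: "\<not> Qsq A E m"
  shows "\<exists>T\<in>tri A E. \<exists>m'. m = xT T + m' \<and> Poly_Mapping.keys m' \<subseteq> A - closed_nbhd E T \<and> \<not> edge_in E m'"
proof -
  let ?S = "Poly_Mapping.keys m"
  have "\<exists>T\<in>tri A E. T \<subseteq> ?S"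
  proof (rule ccontr)
    assume "\<not> ?thesis"
    then obtain C where "vcover A E C" "\<not> cdeg2 C m" using no_tri_cover[OF mA nq] by blast
    then show False using q2 Q2_cover[OF fin] by blast
  qed
  then obtain T where T: "T \<in> tri A E" "T \<subseteq> ?S" by blast
  have finT: "finite T" by (rule tri_finite[OF T(1)])
  have l1: "\<And>v. v \<in> ?S \<Longrightarrow> 1 \<le> lk m v" by (simp add: keys_ge1)
  define m' where "m' = m - xT T"
  have lm': "lk m' v = lk m v - (if v \<in> T then 1 else 0)" for v
    by (simp add: m'_def lookup_minus lookup_xT finT)
  have meq: "m = xT T + m'"
  proof (rule poly_mapping_eqI)
    fix v
    show "lk m v = lk (xT T + m') v"
    proof (cases "v \<in> T")
      case True
      then have "1 \<le> lk m v" using T(2) l1 by auto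
      then show ?thesis using True by (simp add: lookup_add lookup_xT finT lm')
    next
      case False
      then show ?thesis by (simp add: lookup_add lookup_xT finT lm')
    qed
  qed
  have key': "v \<in> Poly_Mapping.keys m' \<Longrightarrow> v \<in> ?S \<and> 1 + (if v \<in> T then 1 else 0) \<le> lk m v" for v
    by (auto simp: keys_ge1 lm' split: if_splits)
  have notT: "v \<notin> T" if v: "v \<in> Poly_Mapping.keys m'" for v
  proof
    assume vT: "v \<in> T"
    then have l2: "2 \<le> lk m v" using key'[OF v] by simp
    obtain p q where pq: "T = {v, p, q}" "v \<noteq> p" "v \<noteq> q" "p \<noteq> q" "{v, p} \<in> E" "{v, q} \<in> E" "{p, q} \<in> E"
      using tri_others[OF T(1) vT] by blast
    have pv: "{p, v} \<in> E" using pq(5) by (simp add: insert_commute)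
    have inS: "p \<in> ?S" "q \<in> ?S" "v \<in> ?S" using T(2) pq(1) by auto
    have "Qsq A E m"
      by (rule Qsq_P2[OF pv pq(6)]) (use inS mA pq l2 l1 in auto)
    then show False using nq by simp
  qed
  have notN: "v \<notin> closed_nbhd E T" if v: "v \<in> Poly_Mapping.keys m'" for v
  proof
    assume "v \<in> closed_nbhd E T"
    moreover have "v \<notin> T" by (rule notT[OF v])
    ultimately obtain t where t: "t \<in> T" "{v, t} \<in> E" by (auto simp: closed_nbhd_def)
    obtain p q where pq: "T = {t, p, q}" "t \<noteq> p" "t \<noteq> q" "p \<noteq> q" "{t, p} \<in> E" "{t, q} \<in> E" "{p, q} \<in> E"
      using tri_others[OF T(1) t(1)] by blast
    have inS: "p \<in> ?S" "q \<in> ?S" "t \<in> ?S" "v \<in> ?S" using T(2) pq(1) t(1) key'[OF v] by auto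
    have "v \<noteq> t" "v \<noteq> p" "v \<noteq> q" using \<open>v \<notin> T\<close> pq(1) by auto
    then have "Qsq A E m"
      by (intro Qsq_P1[OF t(2) pq(7)]) (use inS mA pq l1 in auto)
    then show False using nq by simp
  qed
  have mk: "Poly_Mapping.keys m' \<subseteq> A - closed_nbhd E T"
    using key' notN mA by blast
  have ne: "\<not> edge_in E m'"
  proof
    assume "edge_in E m'"
    then obtain i j where ij: "{i, j} \<in> E" "i \<in> Poly_Mapping.keys m'" "j \<in> Poly_Mapping.keys m'"
      by (auto simp: edge_in_def)
    have iT: "i \<notin> T" and jT: "j \<notin> T" using notT ij by auto
    have "T \<noteq> {}" using T(1) by (auto simp: tri_def)
    then obtain a where a: "a \<in> T" by blast
    obtain p q where pq: "T = {a, p, q}" "a \<noteq> p" "a \<noteq> q" "p \<noteq> q" "{a, p} \<in> E" "{a, q} \<in> E" "{p, q} \<in> E"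
      using tri_others[OF T(1) a] by blast
    have inS: "i \<in> ?S" "j \<in> ?S" "a \<in> ?S" "p \<in> ?S" using key' ij T(2) pq(1) by auto
    have d: "i \<noteq> a" "i \<noteq> p" "j \<noteq> a" "j \<noteq> p" using iT jT pq(1) by auto
    have "Qsq A E m"
      by (rule Qsq_P1[OF ij(1) pq(5)]) (use inS mA d edge_ne[OF ij(1)] pq l1 in auto)
    then show False using nq by simp
  qed
  show ?thesis using T(1) meq mk ne by blast
qed

lemma C3:
  assumes T: "T \<in> tri A E" and T': "T' \<in> tri A E"
    and mk: "Poly_Mapping.keys m' \<subseteq> A - closed_nbhd E T" and ne: "\<not> edge_in E m'"
    and eq: "xT T + m' = xT T' + m''"
  shows "T = T'"
proof -
  have finT: "finite T" by (rule tri_finite[OF T])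
  have finT': "finite T'" by (rule tri_finite[OF T'])
  have sub: "T' \<subseteq> T"
  proof
    fix v assume vT': "v \<in> T'"
    show "v \<in> T"
    proof (rule ccontr)
      assume vT: "v \<notin> T"
      have inm: "x \<in> Poly_Mapping.keys m'" if "x \<in> T'" "x \<notin> T" for x
      proof -
        have "1 \<le> lk (xT T' + m'') x" using that finT' by (simp add: lookup_add lookup_xT)
        then have "1 \<le> lk (xT T + m') x" using eq by simp
        then show ?thesis using that finT by (simp add: lookup_add lookup_xT keys_ge1)
      qed
      have vm: "v \<in> Poly_Mapping.keys m'" by (rule inm[OF vT' vT])
      obtain p q where pq: "T' = {v, p, q}" "v \<noteq> p" "v \<noteq> q" "p \<noteq> q" "{v, p} \<in> E" "{v, q} \<in> E" "{p, q} \<in> E"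
        using tri_others[OF T' vT'] by blast
      show False
      proof (cases "p \<in> T")
        case True
        then have "v \<in> closed_nbhd E T" using pq(5) by (auto simp: closed_nbhd_def)
        then show False using vm mk by blast
      next
        case False
        then have "p \<in> Poly_Mapping.keys m'" using inm pq(1) by auto
        then show False using ne vm pq(5) unfolding edge_in_def by blast
      qed
    qed
  qed
  have "card T' = card T" using T T' by (simp add: tri_def)
  then show ?thesis using card_subset_eq[OF finT sub] by simp
qed

end


lemma mdeg_sumK: "finite K \<Longrightarrow> Poly_Mapping.keys m \<subseteq> K \<Longrightarrow> mdeg m = (\<Sum>i\<in>K. lk m i)"
  unfolding mdeg_def by (rule sum.mono_neutral_left) (auto simp: in_keys_iff)

lemma mdeg_add: "mdeg (a + b) = mdeg a + mdeg b"
proof -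
  let ?K = "Poly_Mapping.keys a \<union> Poly_Mapping.keys b"
  have f: "finite ?K" by simp
  have "mdeg (a + b) = (\<Sum>i\<in>?K. lk (a + b) i)" by (rule mdeg_sumK[OF f]) (simp add: keys_add_nat)
  also have "\<dots> = (\<Sum>i\<in>?K. lk a i) + (\<Sum>i\<in>?K. lk b i)" by (simp add: lookup_add sum.distrib)
  also have "\<dots> = mdeg a + mdeg b" using mdeg_sumK[OF f, of a] mdeg_sumK[OF f, of b] by simp
  finally show ?thesis .
qed

lemma mdeg_xT: "finite T \<Longrightarrow> mdeg (xT T) = card T"
proof -
  assume f: "finite T"
  have "Poly_Mapping.keys (xT T) \<subseteq> T" using f by (auto simp: in_keys_iff lookup_xT split: if_splits)
  then have "mdeg (xT T) = (\<Sum>i\<in>T. lk (xT T) i)" by (rule mdeg_sumK[OF f])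
  also have "\<dots> = card T" using f by (simp add: lookup_xT)
  finally show ?thesis .
qed

lemma keys_xT: "finite T \<Longrightarrow> Poly_Mapping.keys (xT T) \<subseteq> T"
  by (auto simp: in_keys_iff lookup_xT split: if_splits)

lemma polyring_MI: "polyring A = (MI A (\<lambda>_. True) :: 'k::field mpoly set)"
  by (simp add: MI_def)

context gr
begin

definition Sset :: "nat \<Rightarrow> (nat \<Rightarrow>\<^sub>0 nat) set" where
  "Sset d = {m. Poly_Mapping.keys m \<subseteq> A \<and> mdeg m = d \<and> Q2 A E m \<and> \<not> Qsq A E m}"

definition Rset :: "nat set \<Rightarrow> nat \<Rightarrow> (nat \<Rightarrow>\<^sub>0 nat) set" where
  "Rset T d = {m'. Poly_Mapping.keys m' \<subseteq> A - closed_nbhd E T \<and> mdeg m' + 3 = d \<and> \<not> edge_in E m'}"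

lemma S_eq: "Sset d = (\<Union>T\<in>tri A E. (\<lambda>m'. xT T + m') ` Rset T d)"
proof
  show "Sset d \<subseteq> (\<Union>T\<in>tri A E. (\<lambda>m'. xT T + m') ` Rset T d)"
  proof
    fix m assume m: "m \<in> Sset d"
    then have mA: "Poly_Mapping.keys m \<subseteq> A" and md: "mdeg m = d" and q: "Q2 A E m" "\<not> Qsq A E m"
      by (auto simp: Sset_def)
    obtain T m' where T: "T \<in> tri A E" "m = xT T + m'" "Poly_Mapping.keys m' \<subseteq> A - closed_nbhd E T" "\<not> edge_in E m'"
      using C2[OF mA q] by blast
    have "card T = 3" using T(1) by (simp add: tri_def)
    then have "mdeg m' + 3 = d" using md T(2) mdeg_add[of "xT T" m'] mdeg_xT[OF tri_finite[OF T(1)]] by simp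
    then have "m' \<in> Rset T d" using T by (simp add: Rset_def)
    then show "m \<in> (\<Union>T\<in>tri A E. (\<lambda>m'. xT T + m') ` Rset T d)" using T(1,2) by blast
  qed
  show "(\<Union>T\<in>tri A E. (\<lambda>m'. xT T + m') ` Rset T d) \<subseteq> Sset d"
  proof
    fix m assume "m \<in> (\<Union>T\<in>tri A E. (\<lambda>m'. xT T + m') ` Rset T d)"
    then obtain T m' where T: "T \<in> tri A E" "m' \<in> Rset T d" "m = xT T + m'" by blast
    have r: "Poly_Mapping.keys m' \<subseteq> A - closed_nbhd E T" "mdeg m' + 3 = d" "\<not> edge_in E m'"
      using T(2) by (auto simp: Rset_def)
    have finT: "finite T" by (rule tri_finite[OF T(1)])
    have "card T = 3" using T(1) by (simp add: tri_def)
    then have md: "mdeg m = d" using T(3) r(2) mdeg_add[of "xT T" m'] mdeg_xT[OF finT] by simp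
    have "Poly_Mapping.keys m \<subseteq> A"
      using T(3) keys_xT[OF finT] tri_A[OF T(1)] r(1) by (auto simp: keys_add_nat)
    moreover have "Q2 A E m" using C1_Q2[OF T(1)] T(3) by simp
    moreover have "\<not> Qsq A E m" using C1_notQsq[OF T(1) r(1) r(3)] T(3) by simp
    ultimately show "m \<in> Sset d" using md by (simp add: Sset_def)
  qed
qed

lemma finite_tri: "finite (tri A E)"
proof -
  have "tri A E \<subseteq> Pow A" by (auto simp: tri_def)
  then show ?thesis using fin by (rule finite_subset[OF _ finite_Pow_iff[THEN iffD2]])
qed

lemma finite_Rset: "finite (Rset T d)"
  by (rule finite_subset[OF _ finite_monos[OF fin, of "d - 3"]]) (auto simp: Rset_def)

lemma card_S: "card (Sset d) = (\<Sum>T\<in>tri A E. card (Rset T d))"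
proof -
  have "card (\<Union>T\<in>tri A E. (\<lambda>m'. xT T + m') ` Rset T d) = (\<Sum>T\<in>tri A E. card ((\<lambda>m'. xT T + m') ` Rset T d))"
  proof (rule card_UN_disjoint)
    show "finite (tri A E)" by (rule finite_tri)
    show "\<forall>T\<in>tri A E. finite ((\<lambda>m'. xT T + m') ` Rset T d)" using finite_Rset by blast
    show "\<forall>T\<in>tri A E. \<forall>T'\<in>tri A E. T \<noteq> T' \<longrightarrow>
        (\<lambda>m'. xT T + m') ` Rset T d \<inter> (\<lambda>m'. xT T' + m') ` Rset T' d = {}"
    proof (intro ballI impI)
      fix T T' assume T: "T \<in> tri A E" and T': "T' \<in> tri A E" and ne: "T \<noteq> T'"
      show "(\<lambda>m'. xT T + m') ` Rset T d \<inter> (\<lambda>m'. xT T' + m') ` Rset T' d = {}"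
      proof (rule ccontr)
        assume "\<not> ?thesis"
        then obtain m' m'' where mm: "m' \<in> Rset T d" "m'' \<in> Rset T' d" "xT T + m' = xT T' + m''"
          by blast
        have "T = T'" by (rule C3[OF T T' _ _ mm(3)]) (use mm(1) in \<open>auto simp: Rset_def\<close>)
        then show False using ne by simp
      qed
    qed
  qed
  also have "\<dots> = (\<Sum>T\<in>tri A E. card (Rset T d))"
    by (rule sum.cong[OF refl]) (rule card_image, rule inj_onI, simp)
  finally show ?thesis using S_eq by simp
qed

lemma EGdiv:
  assumes "Poly_Mapping.keys m \<subseteq> B"
  shows "(\<exists>h\<in>EG B E. mdvd h m) \<longleftrightarrow> edge_in E m"
proof
  assume "\<exists>h\<in>EG B E. mdvd h m"
  then obtain i j where ij: "mdvd (sgl i + sgl j) m" "{i, j} \<in> E" by (auto simp: EG_def)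
  then have "1 \<le> lk m i" "1 \<le> lk m j" using edge_ne[OF ij(2)] by (auto simp: mdvd_two)
  then show "edge_in E m" using ij(2) unfolding edge_in_def keys_ge1 by blast
next
  assume "edge_in E m"
  then obtain i j where ij: "{i, j} \<in> E" "i \<in> Poly_Mapping.keys m" "j \<in> Poly_Mapping.keys m"
    by (auto simp: edge_in_def)
  have "sgl i + sgl j \<in> EG B E" using ij assms by (auto simp: EG_def)
  moreover have "mdvd (sgl i + sgl j) m" using ij edge_ne[OF ij(1)] by (auto simp: mdvd_two keys_ge1)
  ultimately show "\<exists>h\<in>EG B E. mdvd h m" by blast
qed

end


theorem corollary6p9:
  fixes n :: nat and E :: "nat set set" and z :: int
  assumes "\<forall>e\<in>E. e \<subseteq> {1..n} \<and> card e = 2"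
  shows "hilb {1..n} (symb_sq {1..n} (edge_ideal {1..n} E :: ('k::field) mpoly set))
            (ideal_prod {1..n} (edge_ideal {1..n} E) (edge_ideal {1..n} E)) z
       = (\<Sum>T\<in>triangles n E.
            hilb ({1..n} - closed_nbhd E T) (polyring ({1..n} - closed_nbhd E T))
                 (edge_ideal ({1..n} - closed_nbhd E T) E :: 'k mpoly set) (z - 3))"
proof -
  let ?A = "{1..n} :: nat set"
  interpret g: gr ?A E by unfold_locales (use assms in auto)
  have tri_eq: "triangles n E = tri ?A E" by (simp add: triangles_def tri_def)
  have sym: "symb_sq ?A (edge_ideal ?A E :: 'k mpoly set) = MI ?A (Q2 ?A E)"
    using symb_sq_char[OF g.fin g.EA] by (simp add: Q2_def[abs_def])
  have sq: "ideal_prod ?A (edge_ideal ?A E) (edge_ideal ?A E) = (MI ?A (Qsq ?A E) :: 'k mpoly set)"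
  proof -
    have "ideal_prod ?A (edge_ideal ?A E) (edge_ideal ?A E) = (MG ?A (EG2 ?A E) :: 'k mpoly set)"
      unfolding edge_ideal_MG EG2_def by (rule ideal_prod_MG) (simp_all add: keys_EG)
    then show ?thesis by (simp add: MG_def Qsq_def[abs_def])
  qed
  have rhs: "hilb (?A - closed_nbhd E T) (polyring (?A - closed_nbhd E T))
                 (edge_ideal (?A - closed_nbhd E T) E :: 'k mpoly set) (z - 3) = card (g.Rset T (nat z))"
    if T: "T \<in> tri ?A E" for T
  proof -
    let ?B = "?A - closed_nbhd E T"
    have finB: "finite ?B" by simp
    show ?thesis
    proof (cases "z < 3")
      case True
      have "g.Rset T (nat z) = {}" unfolding g.Rset_def using True by auto
      then show ?thesis using True by (simp add: hilb_def)
    next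
      case False
      have "hilb ?B (polyring ?B) (edge_ideal ?B E :: 'k mpoly set) (z - 3) =
          hilb ?B (MI ?B (\<lambda>_. True)) (MI ?B (\<lambda>m. \<exists>h\<in>EG ?B E. mdvd h m) :: 'k mpoly set) (z - 3)"
        by (simp add: polyring_MI edge_ideal_MG MG_def)
      also have "\<dots> = card {m. Poly_Mapping.keys m \<subseteq> ?B \<and> mdeg m = nat (z - 3) \<and> True \<and> \<not> (\<exists>h\<in>EG ?B E. mdvd h m)}"
        by (rule hilb_MI[OF finB]) (use False in auto)
      also have "{m. Poly_Mapping.keys m \<subseteq> ?B \<and> mdeg m = nat (z - 3) \<and> True \<and> \<not> (\<exists>h\<in>EG ?B E. mdvd h m)}
          = g.Rset T (nat z)"
      proof (rule set_eqI)
        fix m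
        show "m \<in> {m. Poly_Mapping.keys m \<subseteq> ?B \<and> mdeg m = nat (z - 3) \<and> True \<and> \<not> (\<exists>h\<in>EG ?B E. mdvd h m)}
           \<longleftrightarrow> m \<in> g.Rset T (nat z)"
          unfolding g.Rset_def mem_Collect_eq
        proof
          assume h: "Poly_Mapping.keys m \<subseteq> ?B \<and> mdeg m = nat (z - 3) \<and> True \<and> \<not> (\<exists>h\<in>EG ?B E. mdvd h m)"
          then show "Poly_Mapping.keys m \<subseteq> ?B \<and> mdeg m + 3 = nat z \<and> \<not> edge_in E m"
            using g.EGdiv[of m ?B] False by auto
        next
          assume h: "Poly_Mapping.keys m \<subseteq> ?B \<and> mdeg m + 3 = nat z \<and> \<not> edge_in E m"
          then show "Poly_Mapping.keys m \<subseteq> ?B \<and> mdeg m = nat (z - 3) \<and> True \<and> \<not> (\<exists>h\<in>EG ?B E. mdvd h m)"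
            using g.EGdiv[of m ?B] False by auto
        qed
      qed
      finally show ?thesis .
    qed
  qed
  show ?thesis
  proof (cases "z < 0")
    case True
    then show ?thesis by (simp add: hilb_def)
  next
    case False
    have "hilb ?A (symb_sq ?A (edge_ideal ?A E :: 'k mpoly set)) (ideal_prod ?A (edge_ideal ?A E) (edge_ideal ?A E)) z
        = card (g.Sset (nat z))"
      unfolding sym sq g.Sset_def
      by (rule hilb_MI[OF g.fin]) (use False Qsq_Q2[OF g.fin g.EA] in auto)
    also have "\<dots> = (\<Sum>T\<in>tri ?A E. card (g.Rset T (nat z)))" by (rule g.card_S)
    also have "\<dots> = (\<Sum>T\<in>tri ?A E. hilb (?A - closed_nbhd E T) (polyring (?A - closed_nbhd E T))
                 (edge_ideal (?A - closed_nbhd E T) E :: 'k mpoly set) (z - 3))"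
      by (rule sum.cong[OF refl], rule rhs[symmetric], assumption)
    finally show ?thesis by (simp add: tri_eq)
  qed
qed


end
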